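(* Let $\mathcal{X},\mathcal{Y},\mathcal{U},\mathcal{Z}$ be finite sets, let $(X,Y)\in\mathcal{X}\times\mathcal{Y}$ have joint distribution $P_{X,Y}$ with $P_X$ and $P_Y$ of full support, and let $f:\mathcal{X}\times\mathcal{Y}\to\mathcal{U}$ and $g:\mathcal{Y}\to\mathcal{Z}$ be deterministic. Assume the "pairwise shared side information" condition: for all $z\in\mathcal{Z}$ and all $x,x'\in\mathcal{X}$ there exists $y\in\mathcal{Y}$ with $g(y)=z$ and $P_{X,Y}(x,y)P_{X,Y}(x',y)>0$. Then the optimal zero-error rate satisfies $$R^*=\sum_{z\in\mathcal{Z}}P_{g(Y)}(z)\,H_\kappa(G^f_z).$$
   Context: Setting: $(X^n,Y^n)$ denotes $n$ i.i.d. copies of $(X,Y)$. An encoder observes $X^n$ and $(g(Y_t))_{t\le n}$; a decoder observes $Y^n$ and must recover $(f(X_t,Y_t))_{t\le n}$. An $(n,R_n)$-zero-error source code is a pair $\phi_e:\mathcal{X}^n\times\mathcal{Z}^n\to\{0,1\}^*$, $\phi_d:\mathcal{Y}^n\times\{0,1\}^*\to\mathcal{U}^n$ such that $\phi_e(\mathcal{X}^n\times\mathcal{Z}^n)$ is prefix-free, $R_n=\frac1n\mathbb{E}[l(\phi_e(X^n,(g(Y_t))_{t\le n}))]$ ($l$ = word length), and for all $(x^n,y^n)\in\operatorname{supp}P^n_{X,Y}$, $\phi_d(y^n,\phi_e(x^n,(g(y_t))_{t\le n}))=(f(x_t,y_t))_{t\le n}$. A rate $R$ is achievable if some sequence of $(n,R_n)$-zero-error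 codes has $\lim_n R_n=R$; $R^*$ is the infimum of achievable rates. A probabilistic graph is $(\mathcal{V},\mathcal{E},P_V)$ with a distribution $P_V$ on the vertices; a set of vertices is independent if no two of its vertices are adjacent. For a probabilistic graph $G$, let $\Gamma(G)$ be its collection of independent sets; the Körner graph entropy is $H_\kappa(G)=\min I(W;V)$, where $V\sim P_V$ and the minimum is over all conditional distributions $P_{W|V}$ of a random variable $W$ taking values in $\Gamma(G)$ such that $V\in W$ with probability one. For $z\in\mathcal{Z}$, the auxiliary graph $G^f_z$ has vertex set $\mathcal{X}$ with distribution $P_{X|g(Y)=z}$, and $x,x'$ are adjacent iff there is $y\in\mathcal{Y}$ with $g(y)=z$, $P_{X,Y}(x,y)>0$, $P_{X,Y}(x',y)>0$ and $f(x,y)\ne f(x',y)$. *)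

theory Defs
  imports Complex_Main "HOL-Library.Sublist"
begin

text \<open>A probabilistic graph on a finite vertex type is given by a vertex
distribution pv and a (symmetric) adjacency relation adj.\<close>

definition indep_set :: "('v \<Rightarrow> 'v \<Rightarrow> bool) \<Rightarrow> 'v set \<Rightarrow> bool" where
  "indep_set adj S \<longleftrightarrow> (\<forall>a\<in>S. \<forall>b\<in>S. \<not> adj a b)"

text \<open>Mutual information I(W;V) in bits, where V has law pv and W given V
has law Q v (a distribution on vertex sets). Terms with zero probability
contribute 0.\<close>

definition mutual_info :: "('v::finite \<Rightarrow> real) \<Rightarrow> ('v \<Rightarrow> 'v set \<Rightarrow> real) \<Rightarrow> real" where
  "mutual_info pv Q =
     (\<Sum>v\<in>UNIV. \<Sum>W\<in>UNIV.
        if pv v * Q v W = 0 then 0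
        else pv v * Q v W * log 2 (Q v W / (\<Sum>v'\<in>UNIV. pv v' * Q v' W)))"

definition admissible_channel ::
  "('v::finite \<Rightarrow> real) \<Rightarrow> ('v \<Rightarrow> 'v \<Rightarrow> bool) \<Rightarrow> ('v \<Rightarrow> 'v set \<Rightarrow> real) \<Rightarrow> bool" where
  "admissible_channel pv adj Q \<longleftrightarrow>
     (\<forall>v W. 0 \<le> Q v W) \<and>
     (\<forall>v. (\<Sum>W\<in>UNIV. Q v W) = 1) \<and>
     (\<forall>v W. Q v W \<noteq> 0 \<longrightarrow> indep_set adj W) \<and>
     (\<forall>v W. 0 < pv v \<and> 0 < Q v W \<longrightarrow> v \<in> W)"

definition korner_entropy :: "('v::finite \<Rightarrow> real) \<Rightarrow> ('v \<Rightarrow> 'v \<Rightarrow> bool) \<Rightarrow> real" where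
  "korner_entropy pv adj = Inf (mutual_info pv ` {Q. admissible_channel pv adj Q})"

definition pgY :: "('x::finite \<Rightarrow> 'y::finite \<Rightarrow> real) \<Rightarrow> ('y \<Rightarrow> 'z) \<Rightarrow> 'z \<Rightarrow> real" where
  "pgY P g z = (\<Sum>x\<in>UNIV. \<Sum>y\<in>{y. g y = z}. P x y)"

definition cond_X :: "('x::finite \<Rightarrow> 'y::finite \<Rightarrow> real) \<Rightarrow> ('y \<Rightarrow> 'z) \<Rightarrow> 'z \<Rightarrow> 'x \<Rightarrow> real" where
  "cond_X P g z x = (\<Sum>y\<in>{y. g y = z}. P x y) / pgY P g z"

definition aux_adj :: "('x \<Rightarrow> 'y \<Rightarrow> real) \<Rightarrow> ('x \<Rightarrow> 'y \<Rightarrow> 'u) \<Rightarrow> ('y \<Rightarrow> 'z) \<Rightarrow> 'z \<Rightarrow> 'x \<Rightarrow> 'x \<Rightarrow> bool" where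
  "aux_adj P f g z x x' \<longleftrightarrow>
     (\<exists>y. g y = z \<and> 0 < P x y \<and> 0 < P x' y \<and> f x y \<noteq> f x' y)"

definition prob_n :: "('x \<Rightarrow> 'y \<Rightarrow> real) \<Rightarrow> nat \<Rightarrow> 'x list \<Rightarrow> 'y list \<Rightarrow> real" where
  "prob_n P n xs ys = (\<Prod>t<n. P (xs ! t) (ys ! t))"

definition zero_error_code ::
  "('x \<Rightarrow> 'y \<Rightarrow> real) \<Rightarrow> ('x \<Rightarrow> 'y \<Rightarrow> 'u) \<Rightarrow> ('y \<Rightarrow> 'z) \<Rightarrow> nat
   \<Rightarrow> ('x list \<Rightarrow> 'z list \<Rightarrow> bool list) \<Rightarrow> ('y list \<Rightarrow> bool list \<Rightarrow> 'u list) \<Rightarrow> bool" where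
  "zero_error_code P f g n enc dec \<longleftrightarrow>
     (\<forall>xs zs xs' zs'. length xs = n \<and> length zs = n \<and> length xs' = n \<and> length zs' = n \<longrightarrow>
        prefix (enc xs zs) (enc xs' zs') \<longrightarrow> enc xs zs = enc xs' zs') \<and>
     (\<forall>xs ys. length xs = n \<and> length ys = n \<and> 0 < prob_n P n xs ys \<longrightarrow>
        dec ys (enc xs (map g ys)) = map2 f xs ys)"

definition code_rate ::
  "('x::finite \<Rightarrow> 'y::finite \<Rightarrow> real) \<Rightarrow> ('y \<Rightarrow> 'z) \<Rightarrow> nat \<Rightarrow> ('x list \<Rightarrow> 'z list \<Rightarrow> bool list) \<Rightarrow> real" where
  "code_rate P g n enc =
     (1 / real n) * (\<Sum>(xs, ys)\<in>{xs. length xs = n} \<times> {ys. length ys = n}.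
        prob_n P n xs ys * real (length (enc xs (map g ys))))"

definition achievable ::
  "('x::finite \<Rightarrow> 'y::finite \<Rightarrow> real) \<Rightarrow> ('x \<Rightarrow> 'y \<Rightarrow> 'u) \<Rightarrow> ('y \<Rightarrow> 'z) \<Rightarrow> real \<Rightarrow> bool" where
  "achievable P f g R \<longleftrightarrow>
     (\<exists>(enc :: nat \<Rightarrow> 'x list \<Rightarrow> 'z list \<Rightarrow> bool list) (dec :: nat \<Rightarrow> 'y list \<Rightarrow> bool list \<Rightarrow> 'u list).
        (\<forall>n\<ge>1. zero_error_code P f g n (enc n) (dec n)) \<and>
        (\<lambda>n. code_rate P g n (enc n)) \<longlonglongrightarrow> R)"

definition opt_rate ::
  "('x::finite \<Rightarrow> 'y::finite \<Rightarrow> real) \<Rightarrow> ('x \<Rightarrow> 'y \<Rightarrow> 'u) \<Rightarrow> ('y \<Rightarrow> 'z) \<Rightarrow> real" where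
  "opt_rate P f g = Inf {R. achievable P f g R}"

end

theory Submission
  imports Defs
begin


definition Ln :: "'a set \<Rightarrow> nat \<Rightarrow> 'a list set" where
  "Ln A n = {xs. set xs \<subseteq> A \<and> length xs = n}"

lemma finite_Ln: "finite A \<Longrightarrow> finite (Ln A n)"
  unfolding Ln_def by (rule finite_lists_length_eq)

lemma Ln_UNIV: "Ln UNIV n = {xs. length xs = n}"
  unfolding Ln_def by simp

lemma Ln_Suc: "Ln A (Suc n) = (\<lambda>(x, xs). x # xs) ` (A \<times> Ln A n)"
  unfolding Ln_def by (auto simp: length_Suc_conv image_iff)

lemma sum_prod_Ln:
  fixes F :: "nat \<Rightarrow> 'a \<Rightarrow> 'b::comm_semiring_1"
  assumes "finite A"
  shows "(\<Sum>xs\<in>Ln A n. \<Prod>t<n. F t (xs!t)) = (\<Prod>t<n. \<Sum>x\<in>A. F t x)"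
  using assms
proof (induction n arbitrary: F)
  case 0
  have "Ln A 0 = {[]}" by (auto simp: Ln_def)
  then show ?case by simp
next
  case (Suc n)
  have inj: "inj_on (\<lambda>(x, xs). x # xs) (A \<times> Ln A n)"
    by (auto simp: inj_on_def)
  have "(\<Sum>xs\<in>Ln A (Suc n). \<Prod>t<Suc n. F t (xs!t))
      = (\<Sum>(x, xs)\<in>A \<times> Ln A n. \<Prod>t<Suc n. F t ((x#xs)!t))"
    unfolding Ln_Suc by (subst sum.reindex[OF inj]) (simp add: case_prod_unfold)
  also have "\<dots> = (\<Sum>x\<in>A. \<Sum>xs\<in>Ln A n. F 0 x * (\<Prod>t<n. F (Suc t) (xs!t)))"
    unfolding prod.lessThan_Suc_shift by (simp add: sum.cartesian_product[symmetric])
  also have "\<dots> = (\<Sum>x\<in>A. F 0 x * (\<Prod>t<n. \<Sum>x\<in>A. F (Suc t) x))"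
    using Suc.IH[of "\<lambda>t. F (Suc t)"] Suc.prems by (simp add: sum_distrib_left[symmetric])
  also have "\<dots> = (\<Prod>t<Suc n. \<Sum>x\<in>A. F t x)"
    unfolding prod.lessThan_Suc_shift by (simp add: sum_distrib_right)
  finally show ?case .
qed

lemma sum_prod_Ln_UNIV:
  fixes F :: "nat \<Rightarrow> 'a::finite \<Rightarrow> 'b::comm_semiring_1"
  shows "(\<Sum>xs\<in>{xs. length xs = n}. \<Prod>t<n. F t (xs!t)) = (\<Prod>t<n. \<Sum>x\<in>UNIV. F t x)"
  using sum_prod_Ln[of UNIV F n] by (simp add: Ln_UNIV)

lemma sum_prod_Ln2:
  fixes F :: "nat \<Rightarrow> 'a::finite \<Rightarrow> 'c::finite \<Rightarrow> 'b::comm_semiring_1"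
  shows "(\<Sum>xs\<in>{xs. length xs = n}. \<Sum>ys\<in>{ys. length ys = n}. \<Prod>t<n. F t (xs!t) (ys!t))
     = (\<Prod>t<n. \<Sum>x\<in>UNIV. \<Sum>y\<in>UNIV. F t x y)"
proof -
  have "\<And>xs. (\<Sum>ys\<in>{ys. length ys = n}. \<Prod>t<n. F t (xs!t) (ys!t)) = (\<Prod>t<n. \<Sum>y\<in>UNIV. F t (xs!t) y)"
    using sum_prod_Ln_UNIV[of "\<lambda>t y. F t (_!t) y"] by blast
  moreover have "(\<Sum>xs\<in>{xs. length xs = n}. \<Prod>t<n. \<Sum>y\<in>UNIV. F t (xs!t) y) = (\<Prod>t<n. \<Sum>x\<in>UNIV. \<Sum>y\<in>UNIV. F t x y)"
    using sum_prod_Ln_UNIV[of "\<lambda>t x. \<Sum>y\<in>UNIV. F t x y"] by simp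
  ultimately show ?thesis by simp
qed

lemma gibbs:
  fixes a b :: "'i \<Rightarrow> real"
  assumes "finite S" "\<And>i. i \<in> S \<Longrightarrow> 0 < a i" "\<And>i. i \<in> S \<Longrightarrow> 0 < b i"
  shows "(sum a S - sum b S) / ln 2 \<le> (\<Sum>i\<in>S. a i * log 2 (a i / b i))"
proof -
  have "(sum a S - sum b S) / ln 2 = (\<Sum>i\<in>S. (a i - b i) / ln 2)"
    by (simp add: sum_subtractf sum_divide_distrib[symmetric])
  also have "\<dots> \<le> (\<Sum>i\<in>S. a i * log 2 (a i / b i))"
  proof (rule sum_mono)
    fix i assume i: "i \<in> S"
    have ai: "0 < a i" and bi: "0 < b i" using assms i by auto
    have "ln (b i / a i) \<le> b i / a i - 1" using ai bi by (intro ln_le_minus_one) simp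
    hence "ln (a i / b i) \<ge> 1 - b i / a i" using ai bi by (simp add: ln_div)
    hence "a i * ln (a i / b i) \<ge> a i * (1 - b i / a i)" using ai by (intro mult_left_mono) auto
    hence "a i * ln (a i / b i) \<ge> a i - b i" using ai by (simp add: algebra_simps)
    thus "(a i - b i) / ln 2 \<le> a i * log 2 (a i / b i)"
      by (simp add: log_def divide_right_mono)
  qed
  finally show ?thesis .
qed



lemma card_bool_lists: "card {v::bool list. length v = n} = 2 ^ n"
  using card_lists_length_eq[of "UNIV::bool set" n] by simp

lemma kraft:
  fixes S :: "bool list set"
  assumes fin: "finite S" and pf: "\<And>a b. a \<in> S \<Longrightarrow> b \<in> S \<Longrightarrow> prefix a b \<Longrightarrow> a = b"
  shows "(\<Sum>w\<in>S. (1/2::real) ^ length w) \<le> 1"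
proof (cases "S = {}")
  case True then show ?thesis by simp
next
  case False
  define M where "M = Max (length ` S)"
  have lenM: "length w \<le> M" if "w \<in> S" for w using fin that unfolding M_def by auto
  define E where "E w = (\<lambda>u. w @ u) ` {u::bool list. length u = M - length w}" for w
  have cardE: "card (E w) = 2 ^ (M - length w)" for w
    unfolding E_def by (subst card_image) (auto simp: inj_on_def card_bool_lists)
  have finE: "finite (E w)" for w
    unfolding E_def using finite_lists_length_eq[of "UNIV::bool set"] by simp
  have Esub: "E w \<subseteq> {v. length v = M}" if "w \<in> S" for w using lenM[OF that] unfolding E_def by auto
  have disj: "E a \<inter> E b = {}" if "a \<in> S" "b \<in> S" "a \<noteq> b" for a b
  proof (rule ccontr)
    assume "E a \<inter> E b \<noteq> {}"
    then obtain v where "v \<in> E a" "v \<in> E b" by blast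
    then have "prefix a v" "prefix b v" unfolding E_def by (auto simp: prefix_def)
    then have "prefix a b \<or> prefix b a" using prefix_same_cases by blast
    then show False using pf that by metis
  qed
  have "(\<Sum>w\<in>S. card (E w)) = card (\<Union>w\<in>S. E w)"
    using disj by (subst card_UN_disjoint) (auto simp: fin finE)
  also have "\<dots> \<le> card {v::bool list. length v = M}"
    by (rule card_mono) (use Esub finite_lists_length_eq[of "UNIV::bool set"] in auto)
  finally have "(\<Sum>w\<in>S. (2::nat) ^ (M - length w)) \<le> 2 ^ M" by (simp add: cardE card_bool_lists)
  hence le: "(\<Sum>w\<in>S. (2::real) ^ (M - length w)) \<le> 2 ^ M"
  proof -
    have "real (\<Sum>w\<in>S. (2::nat) ^ (M - length w)) \<le> real (2 ^ M)"
      using \<open>(\<Sum>w\<in>S. (2::nat) ^ (M - length w)) \<le> 2 ^ M\<close> by (simp only: of_nat_le_iff)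
    then show ?thesis by (simp add: of_nat_sum)
  qed
  have "(\<Sum>w\<in>S. (1/2::real) ^ length w) = (\<Sum>w\<in>S. (2::real) ^ (M - length w)) / 2 ^ M"
    unfolding sum_divide_distrib
  proof (rule sum.cong)
    fix w assume "w \<in> S"
    then have "M = (M - length w) + length w" using lenM by simp
    then have "(2::real) ^ M = 2 ^ (M - length w) * 2 ^ length w" by (metis power_add)
    then show "(1/2::real) ^ length w = 2 ^ (M - length w) / 2 ^ M"
      by (simp add: power_one_over)
  qed simp
  also have "\<dots> \<le> 1" using le by simp
  finally show ?thesis .
qed



lemma log_prod2:
  assumes "finite I" "\<And>i. i \<in> I \<Longrightarrow> f i \<noteq> 0"
  shows "log 2 (prod f I) = (\<Sum>i\<in>I. log 2 (f i))"
  using ln_prod[OF assms] by (simp add: log_def sum_divide_distrib)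

lemma mi_as_sum:
  fixes pv :: "'v::finite \<Rightarrow> real"
  shows "mutual_info pv Q = (\<Sum>vw\<in>{(v,W). pv v * Q v W \<noteq> 0}.
     pv (fst vw) * Q (fst vw) (snd vw) * log 2 ((pv (fst vw) * Q (fst vw) (snd vw)) /
        (pv (fst vw) * (\<Sum>v'\<in>UNIV. pv v' * Q v' (snd vw)))))"
proof -
  have "mutual_info pv Q = (\<Sum>vw\<in>UNIV.
        if pv (fst vw) * Q (fst vw) (snd vw) = 0 then 0 else
        pv (fst vw) * Q (fst vw) (snd vw) * log 2 (Q (fst vw) (snd vw) / (\<Sum>v'\<in>UNIV. pv v' * Q v' (snd vw))))"
    unfolding mutual_info_def UNIV_Times_UNIV[symmetric] sum.cartesian_product by (simp add: case_prod_unfold)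
  also have "\<dots> = (\<Sum>vw\<in>{vw\<in>UNIV. pv (fst vw) * Q (fst vw) (snd vw) \<noteq> 0}.
        pv (fst vw) * Q (fst vw) (snd vw) * log 2 (Q (fst vw) (snd vw) / (\<Sum>v'\<in>UNIV. pv v' * Q v' (snd vw))))"
    by (subst sum.inter_filter) (auto intro!: sum.cong)
  also have "\<dots> = (\<Sum>vw\<in>{(v,W). pv v * Q v W \<noteq> 0}.
     pv (fst vw) * Q (fst vw) (snd vw) * log 2 ((pv (fst vw) * Q (fst vw) (snd vw)) /
        (pv (fst vw) * (\<Sum>v'\<in>UNIV. pv v' * Q v' (snd vw)))))"
    apply (rule sum.cong)
     apply force
    apply (clarsimp simp: mult_divide_mult_cancel_left)
    done
  finally show ?thesis .
qed

lemma mi_nonneg: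
  fixes pv :: "'v::finite \<Rightarrow> real"
  assumes pv_nn: "\<And>v. 0 \<le> pv v" and pv_sum: "(\<Sum>v\<in>UNIV. pv v) = 1"
    and adm: "admissible_channel pv adj Q"
  shows "0 \<le> mutual_info pv Q"
proof -
  have Q_nn: "\<And>v W. 0 \<le> Q v W" and Q_sum: "\<And>v. (\<Sum>W\<in>UNIV. Q v W) = 1"
    using adm unfolding admissible_channel_def by auto
  define S where "S = {(v,W). pv v * Q v W \<noteq> 0}"
  define qq where "qq W = (\<Sum>v'\<in>UNIV. pv v' * Q v' W)" for W
  define a where "a vw = pv (fst vw) * Q (fst vw) (snd vw)" for vw
  define b where "b vw = pv (fst vw) * qq (snd vw)" for vw
  have a_pos: "0 < a vw" if "vw \<in> S" for vw
    using that pv_nn Q_nn unfolding S_def a_def by (auto simp: less_le)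
  have qq_ge: "pv v * Q v W \<le> qq W" for v W
    unfolding qq_def by (rule member_le_sum) (auto intro: mult_nonneg_nonneg pv_nn Q_nn)
  have b_pos: "0 < b vw" if "vw \<in> S" for vw
  proof -
    have "0 < pv (fst vw)" "0 < a vw" using that pv_nn Q_nn a_pos unfolding S_def by (auto simp: less_le)
    moreover have "a vw \<le> qq (snd vw)" using qq_ge unfolding a_def by simp
    ultimately show ?thesis unfolding b_def by simp
  qed
  have "(sum a S - sum b S) / ln 2 \<le> (\<Sum>vw\<in>S. a vw * log 2 (a vw / b vw))"
    by (rule gibbs) (auto simp: S_def a_pos b_pos)
  also have "\<dots> = mutual_info pv Q"
    unfolding mi_as_sum S_def a_def b_def qq_def by simp
  finally have ineq: "(sum a S - sum b S) / ln 2 \<le> mutual_info pv Q" .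
  have "sum a S = sum a UNIV"
    by (rule sum.mono_neutral_left) (auto simp: S_def a_def)
  also have "\<dots> = (\<Sum>v\<in>UNIV. \<Sum>W\<in>UNIV. pv v * Q v W)"
    unfolding a_def UNIV_Times_UNIV[symmetric] sum.cartesian_product by (simp add: case_prod_unfold)
  also have "\<dots> = 1" by (simp add: sum_distrib_left[symmetric] Q_sum pv_sum)
  finally have sa: "sum a S = 1" .
  have "sum b S \<le> sum b UNIV"
    by (rule sum_mono2) (auto simp: b_def qq_def intro!: mult_nonneg_nonneg sum_nonneg pv_nn Q_nn)
  also have "\<dots> = (\<Sum>v\<in>UNIV. \<Sum>W\<in>UNIV. pv v * qq W)"
    unfolding b_def UNIV_Times_UNIV[symmetric] sum.cartesian_product by (simp add: case_prod_unfold)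
  also have "\<dots> = (\<Sum>W\<in>UNIV. qq W)" by (simp add: sum_distrib_left[symmetric] sum_distrib_right[symmetric] pv_sum)
  also have "\<dots> = (\<Sum>v'\<in>UNIV. \<Sum>W\<in>UNIV. pv v' * Q v' W)"
    unfolding qq_def by (rule sum.swap)
  also have "\<dots> = 1" by (simp add: sum_distrib_left[symmetric] Q_sum pv_sum)
  finally have sb: "sum b S \<le> 1" .
  have "0 \<le> (sum a S - sum b S) / ln 2" using sa sb by simp
  with ineq show ?thesis by linarith
qed

lemma korner_le:
  fixes pv :: "'v::finite \<Rightarrow> real"
  assumes pv_nn: "\<And>v. 0 \<le> pv v" and pv_sum: "(\<Sum>v\<in>UNIV. pv v) = 1"
    and adm: "admissible_channel pv adj Q"
  shows "korner_entropy pv adj \<le> mutual_info pv Q"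
  unfolding korner_entropy_def
  by (rule cInf_lower) (use adm mi_nonneg[OF pv_nn pv_sum] in \<open>auto simp: bdd_below_def\<close>)

lemma korner_approx:
  fixes pv :: "'v::finite \<Rightarrow> real"
  assumes pv_nn: "\<And>v. 0 \<le> pv v" and pv_sum: "(\<Sum>v\<in>UNIV. pv v) = 1"
    and irr: "\<And>v. \<not> adj v v" and eps: "0 < e"
  shows "\<exists>Q. admissible_channel pv adj Q \<and> mutual_info pv Q < korner_entropy pv adj + e"
proof -
  define Q0 :: "'v \<Rightarrow> 'v set \<Rightarrow> real" where "Q0 v W = (if W = {v} then 1 else 0)" for v W
  have "admissible_channel pv adj Q0"
    unfolding admissible_channel_def Q0_def indep_set_def using irr by (auto split: if_splits)
  then have ne: "mutual_info pv ` {Q. admissible_channel pv adj Q} \<noteq> {}" by auto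
  have bdd: "bdd_below (mutual_info pv ` {Q. admissible_channel pv adj Q})"
    using mi_nonneg[OF pv_nn pv_sum] by (auto simp: bdd_below_def)
  have "Inf (mutual_info pv ` {Q. admissible_channel pv adj Q}) < korner_entropy pv adj + e"
    using eps by (simp add: korner_entropy_def)
  then obtain Q where "admissible_channel pv adj Q" "mutual_info pv Q < korner_entropy pv adj + e"
    using cInf_less_iff[OF ne bdd] by auto
  then show ?thesis by blast
qed



lemma marginal_prod:
  fixes p :: "nat \<Rightarrow> 'x::finite \<Rightarrow> real"
  assumes p_sum: "\<And>t. t < n \<Longrightarrow> (\<Sum>x\<in>UNIV. p t x) = 1" and t: "t < n"
  shows "(\<Sum>xs\<in>{xs. length xs = n}. if xs!t = x then (\<Prod>s<n. p s (xs!s)) else 0) = p t x"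
proof -
  define G where "G s y = (if s = t then (if y = x then p s y else 0) else p s y)" for s y
  have eq: "(if xs!t = x then (\<Prod>s<n. p s (xs!s)) else 0) = (\<Prod>s<n. G s (xs!s))" for xs
  proof (cases "xs!t = x")
    case True
    have "(\<Prod>s<n. G s (xs!s)) = (\<Prod>s<n. p s (xs!s))" by (rule prod.cong) (auto simp: G_def True)
    then show ?thesis using True by simp
  next
    case False
    then have "G t (xs!t) = 0" unfolding G_def by simp
    then have "(\<Prod>s<n. G s (xs!s)) = 0" using t by (intro prod_zero) auto
    then show ?thesis using False by simp
  qed
  have "(\<Sum>xs\<in>{xs. length xs = n}. if xs!t = x then (\<Prod>s<n. p s (xs!s)) else 0)
      = (\<Prod>s<n. \<Sum>y\<in>UNIV. G s y)" unfolding eq by (rule sum_prod_Ln_UNIV)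
  also have "\<dots> = (\<Prod>s<n. if s = t then p t x else 1)"
    by (rule prod.cong) (auto simp: G_def p_sum)
  also have "\<dots> = p t x" using t by simp
  finally show ?thesis .
qed

lemma sum_prob_1:
  fixes p :: "nat \<Rightarrow> 'x::finite \<Rightarrow> real"
  assumes p_sum: "\<And>t. t < n \<Longrightarrow> (\<Sum>x\<in>UNIV. p t x) = 1"
  shows "(\<Sum>xs\<in>{xs. length xs = n}. \<Prod>s<n. p s (xs!s)) = 1"
  by (simp add: sum_prod_Ln_UNIV p_sum)

lemma sum_if_eq:
  fixes F :: "'a::finite \<Rightarrow> 'b::comm_monoid_add"
  shows "(\<Sum>u\<in>UNIV. if A \<and> a = u then F u else 0) = (if A then F a else 0)"
  by (cases A) simp_all

lemma converse_core:
  fixes n :: nat and p :: "nat \<Rightarrow> 'x::finite \<Rightarrow> real"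
    and adj :: "nat \<Rightarrow> 'x \<Rightarrow> 'x \<Rightarrow> bool" and c :: "'x list \<Rightarrow> bool list"
  assumes p_nn: "\<And>t x. 0 \<le> p t x" and p_sum: "\<And>t. t < n \<Longrightarrow> (\<Sum>x\<in>UNIV. p t x) = 1"
    and pf: "\<And>xs xs'. length xs = n \<Longrightarrow> length xs' = n \<Longrightarrow> prefix (c xs) (c xs') \<Longrightarrow> c xs = c xs'"
    and col: "\<And>xs xs' t. length xs = n \<Longrightarrow> length xs' = n \<Longrightarrow> c xs = c xs' \<Longrightarrow> t < n \<Longrightarrow>
                \<not> adj t (xs!t) (xs'!t)"
  shows "(\<Sum>t<n. korner_entropy (p t) (adj t))
           \<le> (\<Sum>xs\<in>{xs. length xs = n}. (\<Prod>t<n. p t (xs!t)) * real (length (c xs)))"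
proof -
  define L where "L = {xs::'x list. length xs = n}"
  have finL: "finite L" unfolding L_def using finite_Ln[of "UNIV::'x set" n] by (simp add: Ln_UNIV)
  define Pr where "Pr xs = (\<Prod>t<n. p t (xs!t))" for xs
  define Cl where "Cl xs = {xs'\<in>L. c xs' = c xs}" for xs
  define r where "r xs = sum Pr (Cl xs)" for xs
  define U where "U t xs = (\<lambda>v. v!t) ` Cl xs" for t xs
  define j where "j t x u = (\<Sum>xs\<in>L. if xs!t = x \<and> U t xs = u then Pr xs else 0)" for t x u
  define q where "q t u = (\<Sum>x\<in>UNIV. j t x u)" for t u
  define Q where "Q t x u = (if 0 < p t x then j t x u / p t x else if u = {} then 1 else 0)" for t x u
  have Pr_nn: "0 \<le> Pr xs" for xs unfolding Pr_def by (intro prod_nonneg) (auto intro: p_nn)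
  have Pr_sum: "sum Pr L = 1" unfolding L_def Pr_def by (rule sum_prob_1[OF p_sum])
  have j_nn: "0 \<le> j t x u" for t x u unfolding j_def by (intro sum_nonneg) (auto intro: Pr_nn)
  have j_marg: "(\<Sum>u\<in>UNIV. j t x u) = p t x" if t: "t < n" for t x
  proof -
    have "(\<Sum>u\<in>UNIV. j t x u) = (\<Sum>xs\<in>L. \<Sum>u\<in>UNIV. if xs!t = x \<and> U t xs = u then Pr xs else 0)"
      unfolding j_def by (rule sum.swap)
    also have "\<dots> = (\<Sum>xs\<in>L. if xs!t = x then Pr xs else 0)"
      by (rule sum.cong) (rule refl, rule sum_if_eq)
    also have "\<dots> = p t x" unfolding L_def Pr_def by (rule marginal_prod[OF p_sum t])
    finally show ?thesis .
  qed
  have j_le: "j t x u \<le> p t x" if "t < n" for t x u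
  proof -
    have "j t x u \<le> (\<Sum>u\<in>UNIV. j t x u)" by (rule member_le_sum) (auto intro: j_nn)
    then show ?thesis using j_marg[OF that] by simp
  qed
  have j_ex: "\<exists>xs\<in>L. xs!t = x \<and> U t xs = u" if "j t x u \<noteq> 0" for t x u
  proof (rule ccontr)
    assume "\<not> ?thesis"
    then have "j t x u = 0" unfolding j_def by (intro sum.neutral) auto
    then show False using that by simp
  qed
  have self_Cl: "xs \<in> Cl xs" if "xs \<in> L" for xs using that unfolding Cl_def by simp
  have U_indep: "indep_set (adj t) (U t xs)" if "xs \<in> L" "t < n" for t xs
    unfolding indep_set_def U_def Cl_def using col that by (auto simp: L_def)
  have Q_adm: "admissible_channel (p t) (adj t) (Q t)" if t: "t < n" for t
    unfolding admissible_channel_def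
  proof (intro conjI allI impI)
    fix x u show "0 \<le> Q t x u" unfolding Q_def using j_nn by (auto intro: divide_nonneg_pos)
  next
    fix x show "(\<Sum>u\<in>UNIV. Q t x u) = 1"
    proof (cases "0 < p t x")
      case True
      then show ?thesis unfolding Q_def using j_marg[OF t, of x]
        by (simp add: sum_divide_distrib[symmetric])
    next
      case False
      then show ?thesis unfolding Q_def by simp
    qed
  next
    fix x u assume "Q t x u \<noteq> 0"
    then show "indep_set (adj t) u"
    proof (cases "0 < p t x")
      case True
      with \<open>Q t x u \<noteq> 0\<close> have "j t x u \<noteq> 0" unfolding Q_def by auto
      then obtain xs where "xs \<in> L" "U t xs = u" using j_ex by blast
      then show ?thesis using U_indep t by blast
    next
      case False
      with \<open>Q t x u \<noteq> 0\<close> have "u = {}" unfolding Q_def by (auto split: if_splits)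
      then show ?thesis by (simp add: indep_set_def)
    qed
  next
    fix x u assume "0 < p t x \<and> 0 < Q t x u"
    then have "j t x u \<noteq> 0" unfolding Q_def by auto
    then obtain xs where "xs \<in> L" "xs!t = x" "U t xs = u" using j_ex by blast
    then show "x \<in> u" unfolding U_def using self_Cl by force
  qed
  have pQ: "p t x * Q t x u = j t x u" if t: "t < n" for t x u
  proof (cases "0 < p t x")
    case True then show ?thesis unfolding Q_def by simp
  next
    case False
    then have "p t x = 0" using p_nn[of t x] by simp
    then show ?thesis using j_le[OF t, of x u] j_nn[of t x u] unfolding Q_def by simp
  qed
  define lg where "lg t x u = (if j t x u = 0 then 0 else log 2 (j t x u / (p t x * q t u)))" for t x u
  have MI_eq: "mutual_info (p t) (Q t) = (\<Sum>xs\<in>L. Pr xs * lg t (xs!t) (U t xs))" if t: "t < n" for t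
  proof -
    have "mutual_info (p t) (Q t) = (\<Sum>x\<in>UNIV. \<Sum>u\<in>UNIV. j t x u * lg t x u)"
      unfolding mutual_info_def
    proof (intro sum.cong refl)
      fix x u
      show "(if p t x * Q t x u = 0 then 0
          else p t x * Q t x u * log 2 (Q t x u / (\<Sum>v'\<in>UNIV. p t v' * Q t v' u))) = j t x u * lg t x u"
      proof (cases "j t x u = 0")
        case True then show ?thesis using pQ[OF t] by (simp add: lg_def)
      next
        case False
        then have jp: "0 < j t x u" using j_nn[of t x u] by simp
        then have pp: "0 < p t x" using j_le[OF t, of x u] by simp
        have "(\<Sum>v'\<in>UNIV. p t v' * Q t v' u) = q t u" unfolding q_def using pQ[OF t] by simp
        moreover have "Q t x u = j t x u / p t x" using pp unfolding Q_def by simp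
        ultimately show ?thesis using False pQ[OF t, of x u] by (simp add: lg_def)
      qed
    qed
    also have "\<dots> = (\<Sum>x\<in>UNIV. \<Sum>u\<in>UNIV. \<Sum>xs\<in>L. if xs!t = x \<and> U t xs = u then Pr xs * lg t x u else 0)"
      unfolding j_def sum_distrib_right by (intro sum.cong refl) auto
    also have "\<dots> = (\<Sum>xs\<in>L. \<Sum>x\<in>UNIV. \<Sum>u\<in>UNIV. if xs!t = x \<and> U t xs = u then Pr xs * lg t x u else 0)"
    proof -
      have "(\<Sum>x\<in>UNIV. \<Sum>u\<in>UNIV. \<Sum>xs\<in>L. if xs!t = x \<and> U t xs = u then Pr xs * lg t x u else 0)
         = (\<Sum>x\<in>UNIV. \<Sum>xs\<in>L. \<Sum>u\<in>UNIV. if xs!t = x \<and> U t xs = u then Pr xs * lg t x u else 0)"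
        by (rule sum.cong[OF refl], rule sum.swap)
      also have "\<dots> = (\<Sum>xs\<in>L. \<Sum>x\<in>UNIV. \<Sum>u\<in>UNIV. if xs!t = x \<and> U t xs = u then Pr xs * lg t x u else 0)"
        by (rule sum.swap)
      finally show ?thesis .
    qed
    also have "\<dots> = (\<Sum>xs\<in>L. Pr xs * lg t (xs!t) (U t xs))"
      by (intro sum.cong refl) (simp add: sum_if_eq)
    finally show ?thesis .
  qed
  define S where "S = {xs\<in>L. 0 < Pr xs}"
  have finS: "finite S" using finL unfolding S_def by simp
  have SL: "S \<subseteq> L" unfolding S_def by auto
  have p_pos: "0 < p t (xs!t)" if "xs \<in> S" "t < n" for xs t
  proof -
    have "Pr xs \<noteq> 0" using that unfolding S_def by simp
    then have "p t (xs!t) \<noteq> 0" unfolding Pr_def using that(2) by (auto simp: prod_zero_iff)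
    then show ?thesis using p_nn[of t "xs!t"] by simp
  qed
  have j_ge: "Pr xs \<le> j t (xs!t) (U t xs)" if "xs \<in> L" for xs t
  proof -
    have "Pr xs = (if xs!t = xs!t \<and> U t xs = U t xs then Pr xs else 0)" by simp
    also have "\<dots> \<le> j t (xs!t) (U t xs)" unfolding j_def
      by (rule member_le_sum[OF that]) (auto intro: Pr_nn finL)
    finally show ?thesis .
  qed
  have j_pos: "0 < j t (xs!t) (U t xs)" if "xs \<in> S" for xs t
    using j_ge[of xs t] that unfolding S_def by auto
  have q_ge: "j t x u \<le> q t u" for t x u
    unfolding q_def by (rule member_le_sum) (auto intro: j_nn)
  have q_pos: "0 < q t (U t xs)" if "xs \<in> S" for xs t
    using j_pos[OF that, of t] q_ge[of t "xs!t" "U t xs"] by simp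
  have r_ge: "Pr xs \<le> r xs" if "xs \<in> L" for xs
    unfolding r_def Cl_def by (rule member_le_sum) (use that finL Pr_nn in auto)
  have r_pos: "0 < r xs" if "xs \<in> S" for xs
    using r_ge[of xs] that unfolding S_def by auto
  have Pr_S: "sum Pr S = 1"
  proof -
    have "sum Pr S = sum Pr L"
      by (rule sum.mono_neutral_left[OF finL SL]) (use Pr_nn in \<open>auto simp: S_def less_le\<close>)
    then show ?thesis using Pr_sum by simp
  qed
  have sumS: "(\<Sum>xs\<in>L. Pr xs * F xs) = (\<Sum>xs\<in>S. Pr xs * F xs)" for F :: "'x list \<Rightarrow> real"
    by (rule sum.mono_neutral_right[OF finL SL]) (use Pr_nn in \<open>auto simp: S_def less_le\<close>)
  have Cl_eq: "Cl xs = {xs'\<in>L. c xs' = w}" if "c xs = w" for xs w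
    using that unfolding Cl_def by simp
  define Cw where "Cw w = {xs'\<in>L. c xs' = w}" for w
  define R where "R w = sum Pr (Cw w)" for w
  have finCw: "finite (Cw w)" for w using finL unfolding Cw_def by simp
  have sumR: "(\<Sum>w\<in>c ` L. R w) = 1"
    unfolding R_def Cw_def using sum.image_gen[OF finL, of Pr c] Pr_sum by simp
  have R_nn: "0 \<le> R w" for w unfolding R_def by (intro sum_nonneg) (auto intro: Pr_nn)
  have stepA: "(\<Sum>t<n. korner_entropy (p t) (adj t)) \<le> (\<Sum>t<n. \<Sum>xs\<in>L. Pr xs * lg t (xs!t) (U t xs))"
  proof (rule sum_mono)
    fix t assume "t \<in> {..<n}"
    then have t: "t < n" by simp
    have "korner_entropy (p t) (adj t) \<le> mutual_info (p t) (Q t)"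
      by (rule korner_le[OF p_nn p_sum[OF t] Q_adm[OF t]])
    then show "korner_entropy (p t) (adj t) \<le> (\<Sum>xs\<in>L. Pr xs * lg t (xs!t) (U t xs))"
      using MI_eq[OF t] by simp
  qed
  define \<beta> where "\<beta> xs = r xs * (\<Prod>t<n. j t (xs!t) (U t xs) / q t (U t xs))" for xs
  have \<beta>_pos: "0 < \<beta> xs" if "xs \<in> S" for xs
    unfolding \<beta>_def using r_pos[OF that] j_pos[OF that] q_pos[OF that]
    by (intro mult_pos_pos prod_pos) (auto intro!: divide_pos_pos)
  have \<beta>_nn: "0 \<le> \<beta> xs" for xs
  proof -
    have "0 \<le> r xs" unfolding r_def by (intro sum_nonneg) (auto intro: Pr_nn)
    moreover have "0 \<le> (\<Prod>t<n. j t (xs!t) (U t xs) / q t (U t xs))"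
      by (intro prod_nonneg) (auto intro!: divide_nonneg_nonneg j_nn order_trans[OF j_nn q_ge])
    ultimately show ?thesis unfolding \<beta>_def by simp
  qed
  have sum\<beta>: "sum \<beta> S \<le> 1"
  proof -
    have "sum \<beta> S \<le> sum \<beta> L" by (rule sum_mono2[OF finL SL]) (auto intro: \<beta>_nn)
    also have "\<dots> = (\<Sum>w\<in>c ` L. \<Sum>xs\<in>Cw w. \<beta> xs)"
      unfolding Cw_def by (rule sum.image_gen[OF finL])
    also have "\<dots> \<le> (\<Sum>w\<in>c ` L. R w)"
    proof (rule sum_mono)
      fix w assume "w \<in> c ` L"
      define V where "V t = (\<lambda>v. v!t) ` Cw w" for t
      have "(\<Sum>xs\<in>Cw w. \<beta> xs) = (\<Sum>xs\<in>Cw w. R w * (\<Prod>t<n. j t (xs!t) (V t) / q t (V t)))"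
        by (rule sum.cong) (auto simp: \<beta>_def r_def R_def U_def V_def Cw_def Cl_def)
      also have "\<dots> \<le> (\<Sum>xs\<in>L. R w * (\<Prod>t<n. j t (xs!t) (V t) / q t (V t)))"
        by (rule sum_mono2[OF finL]) (auto simp: Cw_def intro!: mult_nonneg_nonneg R_nn prod_nonneg
             divide_nonneg_nonneg j_nn order_trans[OF j_nn q_ge])
      also have "\<dots> = R w * (\<Prod>t<n. \<Sum>x\<in>UNIV. j t x (V t) / q t (V t))"
        unfolding sum_distrib_left[symmetric] L_def
        using sum_prod_Ln_UNIV[of "\<lambda>t x. j t x (V t) / q t (V t)" n] by simp
      also have "\<dots> \<le> R w * 1"
      proof (rule mult_left_mono[OF _ R_nn], rule prod_le_1)
        fix t assume "t \<in> {..<n}"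
        have "(\<Sum>x\<in>UNIV. j t x (V t) / q t (V t)) = q t (V t) / q t (V t)"
          unfolding q_def sum_divide_distrib ..
        then show "0 \<le> (\<Sum>x\<in>UNIV. j t x (V t) / q t (V t)) \<and> (\<Sum>x\<in>UNIV. j t x (V t) / q t (V t)) \<le> 1"
          by (cases "q t (V t) = 0") auto
      qed
      finally show "(\<Sum>xs\<in>Cw w. \<beta> xs) \<le> R w" by simp
    qed
    finally show ?thesis using sumR by simp
  qed
  have logB: "log 2 (Pr xs / \<beta> xs) = - log 2 (r xs) - (\<Sum>t<n. lg t (xs!t) (U t xs))" if xs: "xs \<in> S" for xs
  proof -
    have jq: "0 < j t (xs!t) (U t xs) / q t (U t xs)" for t using j_pos[OF xs] q_pos[OF xs] by simp
    have "log 2 (Pr xs / \<beta> xs) = log 2 (Pr xs) - log 2 (r xs) - (\<Sum>t<n. log 2 (j t (xs!t) (U t xs) / q t (U t xs)))"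
    proof -
      have "log 2 (Pr xs / \<beta> xs) = log 2 (Pr xs) - log 2 (\<beta> xs)"
        using \<beta>_pos[OF xs] xs by (intro log_divide_pos) (auto simp: S_def)
      moreover have "log 2 (\<beta> xs) = log 2 (r xs) + log 2 (\<Prod>t<n. j t (xs!t) (U t xs) / q t (U t xs))"
        unfolding \<beta>_def using r_pos[OF xs] jq by (intro log_mult_pos prod_pos) auto
      moreover have "log 2 (\<Prod>t<n. j t (xs!t) (U t xs) / q t (U t xs)) = (\<Sum>t<n. log 2 (j t (xs!t) (U t xs) / q t (U t xs)))"
        using jq by (intro log_prod2) (auto simp: less_le)
      ultimately show ?thesis by simp
    qed
    moreover have "log 2 (Pr xs) = (\<Sum>t<n. log 2 (p t (xs!t)))"
      unfolding Pr_def using p_pos[OF xs] by (intro log_prod2) (auto simp: less_le)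
    moreover have "lg t (xs!t) (U t xs) = log 2 (j t (xs!t) (U t xs) / q t (U t xs)) - log 2 (p t (xs!t))" if "t < n" for t
    proof -
      have "lg t (xs!t) (U t xs) = log 2 (j t (xs!t) (U t xs) / (p t (xs!t) * q t (U t xs)))"
        using j_pos[OF xs, of t] unfolding lg_def by simp
      also have "\<dots> = log 2 ((j t (xs!t) (U t xs) / q t (U t xs)) / p t (xs!t))" by (simp add: field_simps)
      also have "\<dots> = log 2 (j t (xs!t) (U t xs) / q t (U t xs)) - log 2 (p t (xs!t))"
        using jq p_pos[OF xs that] by (intro log_divide_pos) auto
      finally show ?thesis .
    qed
    then have "(\<Sum>t<n. lg t (xs!t) (U t xs)) = (\<Sum>t<n. log 2 (j t (xs!t) (U t xs) / q t (U t xs))) - (\<Sum>t<n. log 2 (p t (xs!t)))"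
      by (simp add: sum_subtractf[symmetric])
    ultimately show ?thesis by simp
  qed
  have stepB: "(\<Sum>t<n. \<Sum>xs\<in>L. Pr xs * lg t (xs!t) (U t xs)) \<le> (\<Sum>xs\<in>L. Pr xs * (- log 2 (r xs)))"
  proof -
    have "(sum Pr S - sum \<beta> S) / ln 2 \<le> (\<Sum>xs\<in>S. Pr xs * log 2 (Pr xs / \<beta> xs))"
      by (rule gibbs[OF finS]) (auto simp: S_def intro: \<beta>_pos)
    moreover have "0 \<le> (sum Pr S - sum \<beta> S) / ln 2" using Pr_S sum\<beta> by simp
    ultimately have "0 \<le> (\<Sum>xs\<in>S. Pr xs * (- log 2 (r xs) - (\<Sum>t<n. lg t (xs!t) (U t xs))))"
      using logB by (simp cong: sum.cong)
    then have "(\<Sum>xs\<in>S. Pr xs * (\<Sum>t<n. lg t (xs!t) (U t xs))) \<le> (\<Sum>xs\<in>S. Pr xs * (- log 2 (r xs)))"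
      by (simp add: right_diff_distrib sum_subtractf)
    moreover have "(\<Sum>t<n. \<Sum>xs\<in>L. Pr xs * lg t (xs!t) (U t xs)) = (\<Sum>xs\<in>S. Pr xs * (\<Sum>t<n. lg t (xs!t) (U t xs)))"
    proof -
      have "(\<Sum>t<n. \<Sum>xs\<in>L. Pr xs * lg t (xs!t) (U t xs)) = (\<Sum>xs\<in>L. Pr xs * (\<Sum>t<n. lg t (xs!t) (U t xs)))"
        by (subst sum.swap) (simp add: sum_distrib_left)
      then show ?thesis using sumS[of "\<lambda>xs. \<Sum>t<n. lg t (xs!t) (U t xs)"] by simp
    qed
    moreover have "(\<Sum>xs\<in>L. Pr xs * (- log 2 (r xs))) = (\<Sum>xs\<in>S. Pr xs * (- log 2 (r xs)))"
      by (rule sumS)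
    ultimately show ?thesis by simp
  qed
  define b where "b xs = Pr xs * (1/2) ^ length (c xs) / r xs" for xs
  have b_pos: "0 < b xs" if "xs \<in> S" for xs
    using that r_pos[OF that] unfolding b_def S_def by simp
  have b_nn: "0 \<le> b xs" for xs
    unfolding b_def r_def by (intro divide_nonneg_nonneg mult_nonneg_nonneg sum_nonneg Pr_nn) auto
  have sumb: "sum b S \<le> 1"
  proof -
    have "sum b S \<le> sum b L" by (rule sum_mono2[OF finL SL]) (auto intro: b_nn)
    also have "\<dots> = (\<Sum>w\<in>c ` L. \<Sum>xs\<in>Cw w. b xs)"
      unfolding Cw_def by (rule sum.image_gen[OF finL])
    also have "\<dots> \<le> (\<Sum>w\<in>c ` L. (1/2) ^ length w)"
    proof (rule sum_mono)
      fix w assume "w \<in> c ` L"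
      have "(\<Sum>xs\<in>Cw w. b xs) = (\<Sum>xs\<in>Cw w. Pr xs * (1/2) ^ length w / R w)"
        by (rule sum.cong) (auto simp: b_def r_def R_def Cw_def Cl_def)
      also have "\<dots> = (1/2) ^ length w * (R w / R w)"
        unfolding R_def by (simp add: sum_divide_distrib[symmetric] sum_distrib_right[symmetric] mult.commute)
      also have "\<dots> \<le> (1/2) ^ length w" by (cases "R w = 0") auto
      finally show "(\<Sum>xs\<in>Cw w. b xs) \<le> (1/2) ^ length w" .
    qed
    also have "\<dots> \<le> 1"
      by (rule kraft) (use finL pf in \<open>auto simp: L_def\<close>)
    finally show ?thesis .
  qed
  have logC: "log 2 (Pr xs / b xs) = log 2 (r xs) + real (length (c xs))" if xs: "xs \<in> S" for xs
  proof -
    have Pp: "0 < Pr xs" using xs unfolding S_def by simp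
    have "Pr xs / b xs = r xs * 2 ^ length (c xs)"
      using Pp r_pos[OF xs] unfolding b_def by (simp add: field_simps power_one_over)
    then show ?thesis using r_pos[OF xs] by (simp add: log_mult_pos log_nat_power)
  qed
  have stepC: "(\<Sum>xs\<in>L. Pr xs * (- log 2 (r xs))) \<le> (\<Sum>xs\<in>L. Pr xs * real (length (c xs)))"
  proof -
    have "(sum Pr S - sum b S) / ln 2 \<le> (\<Sum>xs\<in>S. Pr xs * log 2 (Pr xs / b xs))"
      by (rule gibbs[OF finS]) (auto simp: S_def intro: b_pos)
    moreover have "0 \<le> (sum Pr S - sum b S) / ln 2" using Pr_S sumb by simp
    ultimately have "0 \<le> (\<Sum>xs\<in>S. Pr xs * (log 2 (r xs) + real (length (c xs))))"
      using logC by (simp cong: sum.cong)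
    then have "(\<Sum>xs\<in>S. Pr xs * (- log 2 (r xs))) \<le> (\<Sum>xs\<in>S. Pr xs * real (length (c xs)))"
      by (simp add: distrib_left sum.distrib sum_negf)
    moreover have "(\<Sum>xs\<in>L. Pr xs * (- log 2 (r xs))) = (\<Sum>xs\<in>S. Pr xs * (- log 2 (r xs)))"
      by (rule sumS)
    moreover have "(\<Sum>xs\<in>L. Pr xs * real (length (c xs))) = (\<Sum>xs\<in>S. Pr xs * real (length (c xs)))"
      by (rule sumS)
    ultimately show ?thesis by simp
  qed
  have "(\<Sum>t<n. korner_entropy (p t) (adj t)) \<le> (\<Sum>xs\<in>L. Pr xs * real (length (c xs)))"
    using stepA stepB stepC by linarith
  then show ?thesis unfolding L_def Pr_def .
qed



lemma pgY_pos:
  fixes P :: "'x::finite \<Rightarrow> 'y::finite \<Rightarrow> real"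
  assumes nonneg: "\<And>x y. 0 \<le> P x y"
    and pairwise: "\<And>z x x'. \<exists>y. g y = z \<and> 0 < P x y * P x' y"
  shows "0 < pgY P g z"
proof -
  obtain x :: 'x where True by simp
  obtain y where y: "g y = z" "0 < P x y * P x y" using pairwise by blast
  then have Pxy: "0 < P x y" using nonneg[of x y] by (auto simp: zero_less_mult_iff)
  have "P x y \<le> (\<Sum>y\<in>{y. g y = z}. P x y)" by (rule member_le_sum) (auto simp: y nonneg)
  also have "\<dots> \<le> pgY P g z" unfolding pgY_def
    by (rule member_le_sum[of x UNIV "\<lambda>x. \<Sum>y\<in>{y. g y = z}. P x y"]) (auto intro: sum_nonneg nonneg)
  finally show ?thesis using Pxy by simp
qed

lemma cond_nn:
  assumes nonneg: "\<And>x y. 0 \<le> P x y"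
  shows "0 \<le> cond_X P g z x"
  unfolding cond_X_def pgY_def by (intro divide_nonneg_nonneg sum_nonneg) (auto intro: nonneg)

lemma cond_sum:
  fixes P :: "'x::finite \<Rightarrow> 'y::finite \<Rightarrow> real"
  assumes "0 < pgY P g z"
  shows "(\<Sum>x\<in>UNIV. cond_X P g z x) = 1"
  using assms unfolding cond_X_def by (simp add: sum_divide_distrib[symmetric] pgY_def)

lemma sum_fiber_all:
  fixes g :: "'y::finite \<Rightarrow> 'z::finite" and h :: "'y \<Rightarrow> real"
  shows "(\<Sum>z\<in>UNIV. \<Sum>y\<in>{y. g y = z}. h y) = (\<Sum>y\<in>UNIV. h y)"
proof -
  have "\<And>z. (\<Sum>y\<in>{y. g y = z}. h y) = (\<Sum>y\<in>UNIV. if g y = z then h y else 0)"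
    using sum.inter_filter[of "UNIV::'y set" h] by simp
  then have "(\<Sum>z\<in>UNIV. \<Sum>y\<in>{y. g y = z}. h y) = (\<Sum>z\<in>UNIV. \<Sum>y\<in>UNIV. if g y = z then h y else 0)"
    by simp
  also have "\<dots> = (\<Sum>y\<in>UNIV. \<Sum>z\<in>UNIV. if g y = z then h y else 0)" by (rule sum.swap)
  also have "\<dots> = (\<Sum>y\<in>UNIV. h y)" by simp
  finally show ?thesis .
qed

lemma pgY_sum:
  fixes P :: "'x::finite \<Rightarrow> 'y::finite \<Rightarrow> real" and g :: "'y \<Rightarrow> 'z::finite"
  assumes sum1: "(\<Sum>x\<in>UNIV. \<Sum>y\<in>UNIV. P x y) = 1"
  shows "(\<Sum>z\<in>UNIV. pgY P g z) = 1"
proof -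
  have "(\<Sum>z\<in>UNIV. pgY P g z) = (\<Sum>x\<in>UNIV. \<Sum>z\<in>UNIV. \<Sum>y\<in>{y. g y = z}. P x y)"
    unfolding pgY_def by (rule sum.swap)
  also have "\<dots> = (\<Sum>x\<in>UNIV. \<Sum>y\<in>UNIV. P x y)"
  proof (rule sum.cong[OF refl])
    fix x
    show "(\<Sum>z\<in>UNIV. \<Sum>y\<in>{y. g y = z}. P x y) = (\<Sum>y\<in>UNIV. P x y)"
      by (rule sum_fiber_all)
  qed
  finally show ?thesis using sum1 by simp
qed

lemma sum_map_fiber:
  fixes g :: "'y::finite \<Rightarrow> 'z::finite" and F :: "'y list \<Rightarrow> real"
  shows "(\<Sum>ys\<in>{ys. length ys = n}. F ys) = (\<Sum>zs\<in>{zs. length zs = n}. \<Sum>ys\<in>{ys. length ys = n}. if map g ys = zs then F ys else 0)"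
proof -
  have finZ: "finite {zs::'z list. length zs = n}" using finite_Ln[of "UNIV::'z set" n] by (simp add: Ln_UNIV)
  have "(\<Sum>ys\<in>{ys. length ys = n}. F ys) = (\<Sum>ys\<in>{ys. length ys = n}. \<Sum>zs\<in>{zs. length zs = n}. if map g ys = zs then F ys else 0)"
  proof (rule sum.cong[OF refl])
    fix ys :: "'y list" assume "ys \<in> {ys. length ys = n}"
    then have "map g ys \<in> {zs. length zs = n}" by simp
    then show "F ys = (\<Sum>zs\<in>{zs. length zs = n}. if map g ys = zs then F ys else 0)"
      using finZ by (simp add: sum.delta)
  qed
  also have "\<dots> = (\<Sum>zs\<in>{zs. length zs = n}. \<Sum>ys\<in>{ys. length ys = n}. if map g ys = zs then F ys else 0)"
    by (rule sum.swap)
  finally show ?thesis .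
qed

lemma confusable:
  fixes P :: "'x \<Rightarrow> 'y \<Rightarrow> real"
  assumes nonneg: "\<And>x y. 0 \<le> P x y"
    and pairwise: "\<And>z x x'. \<exists>y. g y = z \<and> 0 < P x y * P x' y"
    and code: "zero_error_code P f g n enc dec"
    and len: "length xs = n" "length xs' = n" "length zs = n"
    and same: "enc xs zs = enc xs' zs" and t: "t < n"
  shows "\<not> aux_adj P f g (zs!t) (xs!t) (xs'!t)"
proof
  assume "aux_adj P f g (zs!t) (xs!t) (xs'!t)"
  then obtain y0 where y0: "g y0 = zs!t" "0 < P (xs!t) y0" "0 < P (xs'!t) y0" "f (xs!t) y0 \<noteq> f (xs'!t) y0"
    unfolding aux_adj_def by blast
  define sel where "sel s = (SOME y. g y = zs!s \<and> 0 < P (xs!s) y * P (xs'!s) y)" for s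
  have sel: "g (sel s) = zs!s \<and> 0 < P (xs!s) (sel s) * P (xs'!s) (sel s)" for s
    unfolding sel_def by (rule someI_ex) (rule pairwise)
  define ys where "ys = map (\<lambda>s. if s = t then y0 else sel s) [0..<n]"
  have lys: "length ys = n" unfolding ys_def by simp
  have ysn: "ys!s = (if s = t then y0 else sel s)" if "s < n" for s
    unfolding ys_def using that by simp
  have gys: "map g ys = zs"
    by (rule nth_equalityI) (auto simp: lys len ysn y0 sel)
  have pos: "0 < P (xs!s) (ys!s) \<and> 0 < P (xs'!s) (ys!s)" if "s < n" for s
  proof (cases "s = t")
    case True then show ?thesis using y0 ysn[OF that] by simp
  next
    case False
    have "0 < P (xs!s) (sel s) * P (xs'!s) (sel s)" using sel by blast
    then have "0 < P (xs!s) (sel s) \<and> 0 < P (xs'!s) (sel s)"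
      using nonneg[of "xs!s" "sel s"] nonneg[of "xs'!s" "sel s"] by (auto simp: zero_less_mult_iff)
    then show ?thesis using ysn[OF that] False by simp
  qed
  have p1: "0 < prob_n P n xs ys" unfolding prob_n_def by (rule prod_pos) (use pos in auto)
  have p2: "0 < prob_n P n xs' ys" unfolding prob_n_def by (rule prod_pos) (use pos in auto)
  have d1: "dec ys (enc xs (map g ys)) = map2 f xs ys"
    using code p1 len lys unfolding zero_error_code_def by blast
  have d2: "dec ys (enc xs' (map g ys)) = map2 f xs' ys"
    using code p2 len lys unfolding zero_error_code_def by blast
  have "map2 f xs ys = map2 f xs' ys" using d1 d2 same gys by simp
  then have "map2 f xs ys ! t = map2 f xs' ys ! t" by simp
  then have "f (xs!t) (ys!t) = f (xs'!t) (ys!t)" using t len lys by simp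
  then show False using y0 ysn[OF t] by simp
qed

lemma fiber_prob:
  fixes P :: "'x::finite \<Rightarrow> 'y::finite \<Rightarrow> real" and g :: "'y \<Rightarrow> 'z::finite"
  assumes pgpos: "\<And>z. 0 < pgY P g z"
    and len: "length xs = n" "length zs = n"
  shows "(\<Sum>ys\<in>{ys. length ys = n}. if map g ys = zs then prob_n P n xs ys else 0)
     = (\<Prod>t<n. pgY P g (zs!t)) * (\<Prod>t<n. cond_X P g (zs!t) (xs!t))"
proof -
  have "(\<Sum>ys\<in>{ys. length ys = n}. if map g ys = zs then prob_n P n xs ys else 0)
      = (\<Sum>ys\<in>{ys. length ys = n}. \<Prod>t<n. (if g (ys!t) = zs!t then P (xs!t) (ys!t) else 0))"
  proof (rule sum.cong[OF refl])
    fix ys :: "'y list" assume "ys \<in> {ys. length ys = n}"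
    then have lys: "length ys = n" by simp
    show "(if map g ys = zs then prob_n P n xs ys else 0) = (\<Prod>t<n. (if g (ys!t) = zs!t then P (xs!t) (ys!t) else 0))"
    proof (cases "map g ys = zs")
      case True
      then have "\<forall>t<n. g (ys!t) = zs!t" using lys by auto
      then show ?thesis using True unfolding prob_n_def by (auto intro!: prod.cong)
    next
      case False
      then obtain t where "t < n" "g (ys!t) \<noteq> zs!t" using lys len by (auto simp: list_eq_iff_nth_eq)
      then show ?thesis using False by (auto intro!: prod_zero bexI[of _ t])
    qed
  qed
  also have "\<dots> = (\<Prod>t<n. \<Sum>y\<in>UNIV. if g y = zs!t then P (xs!t) y else 0)"
    by (rule sum_prod_Ln_UNIV)
  also have "\<dots> = (\<Prod>t<n. pgY P g (zs!t) * cond_X P g (zs!t) (xs!t))"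
  proof (rule prod.cong[OF refl])
    fix t
    have "(\<Sum>y\<in>UNIV. if g y = zs!t then P (xs!t) y else 0) = (\<Sum>y\<in>{y. g y = zs!t}. P (xs!t) y)"
      using sum.inter_filter[of "UNIV::'y set" "P (xs!t)" "\<lambda>y. g y = zs!t"] by simp
    also have "\<dots> = pgY P g (zs!t) * cond_X P g (zs!t) (xs!t)"
      using pgpos[of "zs!t"] unfolding cond_X_def by simp
    finally show "(\<Sum>y\<in>UNIV. if g y = zs!t then P (xs!t) y else 0) = pgY P g (zs!t) * cond_X P g (zs!t) (xs!t)" .
  qed
  also have "\<dots> = (\<Prod>t<n. pgY P g (zs!t)) * (\<Prod>t<n. cond_X P g (zs!t) (xs!t))"
    by (rule prod.distrib)
  finally show ?thesis .
qed

lemma converse_rate: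
  fixes P :: "'x::finite \<Rightarrow> 'y::finite \<Rightarrow> real" and f :: "'x \<Rightarrow> 'y \<Rightarrow> 'u" and g :: "'y \<Rightarrow> 'z::finite"
  assumes nonneg: "\<And>x y. 0 \<le> P x y"
    and sum1: "(\<Sum>x\<in>UNIV. \<Sum>y\<in>UNIV. P x y) = 1"
    and pairwise: "\<And>z x x'. \<exists>y. g y = z \<and> 0 < P x y * P x' y"
    and n: "1 \<le> n" and code: "zero_error_code P f g n enc dec"
  shows "(\<Sum>z\<in>UNIV. pgY P g z * korner_entropy (cond_X P g z) (aux_adj P f g z)) \<le> code_rate P g n enc"
proof -
  define K where "K z = korner_entropy (cond_X P g z) (aux_adj P f g z)" for z
  define Hs where "Hs = (\<Sum>z\<in>UNIV. pgY P g z * K z)"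
  define Lx where "Lx = {xs::'x list. length xs = n}"
  define Ly where "Ly = {ys::'y list. length ys = n}"
  define Lz where "Lz = {zs::'z list. length zs = n}"
  define pz where "pz zs = (\<Prod>t<n. pgY P g (zs!t))" for zs
  define cz where "cz zs xs = (\<Prod>t<n. cond_X P g (zs!t) (xs!t))" for zs xs
  have pgpos: "\<And>z. 0 < pgY P g z" using pgY_pos[of P g, OF nonneg pairwise] by blast
  have finLx: "finite Lx" unfolding Lx_def using finite_Ln[of "UNIV::'x set" n] by (simp add: Ln_UNIV)
  have finLy: "finite Ly" unfolding Ly_def using finite_Ln[of "UNIV::'y set" n] by (simp add: Ln_UNIV)
  have finLz: "finite Lz" unfolding Lz_def using finite_Ln[of "UNIV::'z set" n] by (simp add: Ln_UNIV)
  have pz_nn: "0 \<le> pz zs" for zs unfolding pz_def by (intro prod_nonneg) (auto intro: less_imp_le pgpos)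
  have E2: "(\<Sum>(xs, ys)\<in>Lx \<times> Ly. prob_n P n xs ys * real (length (enc xs (map g ys))))
      = (\<Sum>zs\<in>Lz. pz zs * (\<Sum>xs\<in>Lx. cz zs xs * real (length (enc xs zs))))"
  proof -
    have "(\<Sum>(xs, ys)\<in>Lx \<times> Ly. prob_n P n xs ys * real (length (enc xs (map g ys))))
        = (\<Sum>xs\<in>Lx. \<Sum>ys\<in>Ly. prob_n P n xs ys * real (length (enc xs (map g ys))))"
      by (simp add: sum.cartesian_product)
    also have "\<dots> = (\<Sum>xs\<in>Lx. \<Sum>zs\<in>Lz. \<Sum>ys\<in>Ly. if map g ys = zs then prob_n P n xs ys * real (length (enc xs (map g ys))) else 0)"
      unfolding Ly_def Lz_def by (intro sum.cong refl sum_map_fiber)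
    also have "\<dots> = (\<Sum>xs\<in>Lx. \<Sum>zs\<in>Lz. (\<Sum>ys\<in>Ly. if map g ys = zs then prob_n P n xs ys else 0) * real (length (enc xs zs)))"
      unfolding sum_distrib_right by (intro sum.cong refl) auto
    also have "\<dots> = (\<Sum>xs\<in>Lx. \<Sum>zs\<in>Lz. pz zs * cz zs xs * real (length (enc xs zs)))"
      unfolding Ly_def pz_def cz_def
      by (intro sum.cong refl) (simp add: fiber_prob[OF pgpos] Lx_def Lz_def)
    also have "\<dots> = (\<Sum>zs\<in>Lz. \<Sum>xs\<in>Lx. pz zs * cz zs xs * real (length (enc xs zs)))"
      by (rule sum.swap)
    also have "\<dots> = (\<Sum>zs\<in>Lz. pz zs * (\<Sum>xs\<in>Lx. cz zs xs * real (length (enc xs zs))))"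
      by (simp add: sum_distrib_left mult.assoc)
    finally show ?thesis .
  qed
  have E3: "(\<Sum>t<n. K (zs!t)) \<le> (\<Sum>xs\<in>Lx. cz zs xs * real (length (enc xs zs)))" if zs: "zs \<in> Lz" for zs
  proof -
    have lz: "length zs = n" using zs unfolding Lz_def by simp
    have "(\<Sum>t<n. korner_entropy (cond_X P g (zs!t)) (aux_adj P f g (zs!t)))
        \<le> (\<Sum>xs\<in>{xs. length xs = n}. (\<Prod>t<n. cond_X P g (zs!t) (xs!t)) * real (length (enc xs zs)))"
    proof (rule converse_core)
      show "\<And>t x. 0 \<le> cond_X P g (zs!t) x" by (rule cond_nn[OF nonneg])
      show "\<And>t. t < n \<Longrightarrow> (\<Sum>x\<in>UNIV. cond_X P g (zs!t) x) = 1" by (rule cond_sum[OF pgpos])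
      show "\<And>xs xs'. length xs = n \<Longrightarrow> length xs' = n \<Longrightarrow> prefix (enc xs zs) (enc xs' zs) \<Longrightarrow> enc xs zs = enc xs' zs"
        using code lz unfolding zero_error_code_def by blast
      show "\<And>xs xs' t. length xs = n \<Longrightarrow> length xs' = n \<Longrightarrow> enc xs zs = enc xs' zs \<Longrightarrow> t < n \<Longrightarrow>
                \<not> aux_adj P f g (zs!t) (xs!t) (xs'!t)"
        using confusable[OF nonneg pairwise code _ _ lz] by blast
    qed
    then show ?thesis unfolding K_def cz_def Lx_def .
  qed
  have E4: "(\<Sum>zs\<in>Lz. pz zs * (\<Sum>t<n. K (zs!t))) = real n * Hs"
  proof -
    have "(\<Sum>zs\<in>Lz. pz zs * (\<Sum>t<n. K (zs!t))) = (\<Sum>t<n. \<Sum>zs\<in>Lz. \<Prod>s<n. (if s = t then pgY P g (zs!s) * K (zs!s) else pgY P g (zs!s)))"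
    proof -
      have "pz zs * K (zs!t) = (\<Prod>s<n. (if s = t then pgY P g (zs!s) * K (zs!s) else pgY P g (zs!s)))" if "t < n" for zs t
      proof -
        have "(\<Prod>s<n. (if s = t then pgY P g (zs!s) * K (zs!s) else pgY P g (zs!s)))
            = (\<Prod>s<n. pgY P g (zs!s) * (if s = t then K (zs!s) else 1))"
          by (rule prod.cong) auto
        also have "\<dots> = pz zs * K (zs!t)" unfolding pz_def prod.distrib using that by simp
        finally show ?thesis by simp
      qed
      then show ?thesis
        by (subst sum.swap) (simp add: sum_distrib_left)
    qed
    also have "\<dots> = (\<Sum>t<n. \<Prod>s<n. \<Sum>z\<in>UNIV. (if s = t then pgY P g z * K z else pgY P g z))"
      unfolding Lz_def by (intro sum.cong refl) (rule sum_prod_Ln_UNIV[of "\<lambda>s z. if s = t then pgY P g z * K z else pgY P g z" for t])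
    also have "\<dots> = (\<Sum>t<n. \<Prod>s<n. (if s = t then Hs else 1))"
      by (intro sum.cong prod.cong refl) (auto simp: Hs_def pgY_sum[OF sum1])
    also have "\<dots> = real n * Hs" by simp
    finally show ?thesis .
  qed
  have "real n * Hs \<le> (\<Sum>zs\<in>Lz. pz zs * (\<Sum>xs\<in>Lx. cz zs xs * real (length (enc xs zs))))"
    unfolding E4[symmetric] by (rule sum_mono) (rule mult_left_mono[OF E3 pz_nn])
  also have "\<dots> = real n * code_rate P g n enc"
    using n unfolding code_rate_def E2[symmetric] by (simp add: Lx_def Ly_def)
  finally have "real n * Hs \<le> real n * code_rate P g n enc" .
  then show ?thesis unfolding Hs_def K_def using n by simp
qed



definition pf_on :: "nat \<Rightarrow> ('x list \<Rightarrow> 'z list \<Rightarrow> bool list) \<Rightarrow> bool" where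
  "pf_on n enc \<longleftrightarrow> (\<forall>xs zs xs' zs'. length xs = n \<and> length zs = n \<and> length xs' = n \<and> length zs' = n \<longrightarrow>
        prefix (enc xs zs) (enc xs' zs') \<longrightarrow> enc xs zs = enc xs' zs')"

definition col_ok :: "('x \<Rightarrow> 'y \<Rightarrow> real) \<Rightarrow> ('x \<Rightarrow> 'y \<Rightarrow> 'u) \<Rightarrow> ('y \<Rightarrow> 'z) \<Rightarrow> nat \<Rightarrow> ('x list \<Rightarrow> 'z list \<Rightarrow> bool list) \<Rightarrow> bool" where
  "col_ok P f g n enc \<longleftrightarrow> (\<forall>xs xs' ys. length xs = n \<and> length xs' = n \<and> length ys = n \<and>
      0 < prob_n P n xs ys \<and> 0 < prob_n P n xs' ys \<and> enc xs (map g ys) = enc xs' (map g ys) \<longrightarrow>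
      map2 f xs ys = map2 f xs' ys)"

lemma code_from_enc:
  assumes "pf_on n enc" "col_ok P f g n enc"
  shows "\<exists>dec. zero_error_code P f g n enc dec"
proof -
  define dec where "dec ys w = map2 f (SOME xs'. length xs' = n \<and> 0 < prob_n P n xs' ys \<and> enc xs' (map g ys) = w) ys" for ys w
  have "zero_error_code P f g n enc dec"
    unfolding zero_error_code_def
  proof (intro conjI allI impI)
    fix xs zs xs' zs'
    assume "length xs = n \<and> length zs = n \<and> length xs' = n \<and> length zs' = n" "prefix (enc xs zs) (enc xs' zs')"
    then show "enc xs zs = enc xs' zs'" using assms(1) unfolding pf_on_def by blast
  next
    fix xs ys assume a: "length xs = n \<and> length ys = n \<and> 0 < prob_n P n xs ys"
    define xs' where "xs' = (SOME xs'. length xs' = n \<and> 0 < prob_n P n xs' ys \<and> enc xs' (map g ys) = enc xs (map g ys))"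
    have "length xs' = n \<and> 0 < prob_n P n xs' ys \<and> enc xs' (map g ys) = enc xs (map g ys)"
      unfolding xs'_def by (rule someI[of _ xs]) (use a in auto)
    then have "map2 f xs' ys = map2 f xs ys" using assms(2) a unfolding col_ok_def by blast
    then show "dec ys (enc xs (map g ys)) = map2 f xs ys" unfolding dec_def xs'_def by simp
  qed
  then show ?thesis by blast
qed

definition pad :: "nat \<Rightarrow> ('x list \<Rightarrow> 'z list \<Rightarrow> bool list) \<Rightarrow> ('x list \<Rightarrow> 'z list \<Rightarrow> bool list)" where
  "pad k enc = (\<lambda>xs zs. enc xs zs @ replicate k False)"

lemma pf_pad: "pf_on n enc \<Longrightarrow> pf_on n (pad k enc)"
  unfolding pf_on_def pad_def
proof (intro allI impI)
  fix xs zs xs' zs'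
  assume pf: "\<forall>xs zs xs' zs'. length xs = n \<and> length zs = n \<and> length xs' = n \<and> length zs' = n \<longrightarrow>
          prefix (enc xs zs) (enc xs' zs') \<longrightarrow> enc xs zs = enc xs' zs'"
    and l: "length xs = n \<and> length zs = n \<and> length xs' = n \<and> length zs' = n"
    and p: "prefix (enc xs zs @ replicate k False) (enc xs' zs' @ replicate k False)"
  have "length (enc xs zs) \<le> length (enc xs' zs')" using prefix_length_le[OF p] by simp
  moreover have "prefix (enc xs zs) (enc xs' zs' @ replicate k False)"
    using p by (meson prefix_order.dual_order.trans prefixI)
  ultimately have "prefix (enc xs zs) (enc xs' zs')"
    by (metis prefix_append prefix_length_prefix prefix_order.refl)
  then show "enc xs zs @ replicate k False = enc xs' zs' @ replicate k False" using pf l by simp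
qed

lemma col_pad: "col_ok P f g n enc \<Longrightarrow> col_ok P f g n (pad k enc)"
  unfolding col_ok_def pad_def by simp

lemma sum_prob_n:
  fixes P :: "'x::finite \<Rightarrow> 'y::finite \<Rightarrow> real"
  assumes sum1: "(\<Sum>x\<in>UNIV. \<Sum>y\<in>UNIV. P x y) = 1"
  shows "(\<Sum>(xs, ys)\<in>{xs. length xs = n} \<times> {ys. length ys = n}. prob_n P n xs ys) = 1"
  unfolding prob_n_def sum.cartesian_product[symmetric]
  using sum_prod_Ln2[of "\<lambda>t x y. P x y" n] sum1 by simp

lemma rate_pad:
  fixes P :: "'x::finite \<Rightarrow> 'y::finite \<Rightarrow> real"
  assumes sum1: "(\<Sum>x\<in>UNIV. \<Sum>y\<in>UNIV. P x y) = 1" and n: "1 \<le> n"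
  shows "code_rate P g n (pad k enc) = code_rate P g n enc + real k / real n"
proof -
  have "(\<Sum>(xs, ys)\<in>{xs. length xs = n} \<times> {ys. length ys = n}. prob_n P n xs ys * real (length (pad k enc xs (map g ys))))
    = (\<Sum>(xs, ys)\<in>{xs. length xs = n} \<times> {ys. length ys = n}. prob_n P n xs ys * real (length (enc xs (map g ys))))
      + real k * (\<Sum>(xs, ys)\<in>{xs. length xs = n} \<times> {ys. length ys = n}. prob_n P n xs ys)"
    unfolding pad_def sum_distrib_left sum.distrib[symmetric]
    by (intro sum.cong refl) (auto simp: algebra_simps)
  then show ?thesis unfolding code_rate_def sum_prob_n[OF sum1] using n
    by (simp add: field_simps)
qed

lemma achievable_of_upper:
  fixes P :: "'x::finite \<Rightarrow> 'y::finite \<Rightarrow> real" and g :: "'y \<Rightarrow> 'z"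
    and enc :: "nat \<Rightarrow> 'x list \<Rightarrow> 'z list \<Rightarrow> bool list"
  assumes sum1: "(\<Sum>x\<in>UNIV. \<Sum>y\<in>UNIV. P x y) = 1"
    and codes: "\<And>n. 1 \<le> n \<Longrightarrow> pf_on n (enc n) \<and> col_ok P f g n (enc n) \<and> code_rate P g n (enc n) \<le> u n"
    and lim: "u \<longlonglongrightarrow> u0" and lt: "u0 < R"
  shows "achievable P f g R"
proof -
  define k where "k n = nat \<lfloor>(R - code_rate P g n (enc n)) * real n\<rfloor>" for n
  define enc' where "enc' n = pad (k n) (enc n)" for n
  have ex: "\<exists>dec. zero_error_code P f g n (enc' n) dec" if "1 \<le> n" for n
    unfolding enc'_def using codes[OF that] by (intro code_from_enc pf_pad col_pad) auto
  define dec' where "dec' n = (SOME dec. zero_error_code P f g n (enc' n) dec)" for n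
  have zc: "\<forall>n\<ge>1. zero_error_code P f g n (enc' n) (dec' n)"
    unfolding dec'_def
  proof (intro allI impI)
    fix n :: nat assume "1 \<le> n"
    from ex[OF this] show "zero_error_code P f g n (enc' n) (SOME dec. zero_error_code P f g n (enc' n) dec)"
      by (rule someI_ex)
  qed
  have ev: "eventually (\<lambda>n. u n < R) sequentially"
    using lim lt by (rule order_tendstoD)
  have ev2: "eventually (\<lambda>n. R - 1 / real n \<le> code_rate P g n (enc' n) \<and> code_rate P g n (enc' n) \<le> R) sequentially"
    using ev eventually_ge_at_top[of 1]
  proof eventually_elim
    case (elim n)
    then have n1: "1 \<le> n" and r: "code_rate P g n (enc n) < R" using codes[of n] by auto
    define x where "x = (R - code_rate P g n (enc n)) * real n"
    have x0: "0 \<le> x" unfolding x_def using r by simp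
    have kx: "real (k n) \<le> x" "x - 1 < real (k n)"
      unfolding k_def x_def[symmetric] using x0 by (simp_all add: of_nat_nat)
    have rate': "code_rate P g n (enc' n) = code_rate P g n (enc n) + real (k n) / real n"
      unfolding enc'_def by (rule rate_pad[OF sum1 n1])
    have npos: "0 < real n" using n1 by simp
    have A: "real (k n) / real n \<le> x / real n" using kx npos by (simp add: divide_right_mono)
    have B: "(x - 1) / real n \<le> real (k n) / real n" using kx npos by (simp add: divide_right_mono)
    have C: "x / real n = R - code_rate P g n (enc n)" unfolding x_def using npos by simp
    have D: "(x - 1) / real n = R - code_rate P g n (enc n) - 1 / real n"
      unfolding x_def using npos by (simp add: field_simps)
    have E1: "code_rate P g n (enc' n) \<le> R" using A C rate' by linarith
    have E2: "R - 1 / real n \<le> code_rate P g n (enc' n)" using B D rate' by linarith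
    show ?case using E1 E2 by blast
  qed
  have l1: "(\<lambda>n. R - 1 / real n) \<longlonglongrightarrow> R"
    using tendsto_diff[OF tendsto_const[of R] lim_inverse_n] by (simp add: inverse_eq_divide)
  have "(\<lambda>n. code_rate P g n (enc' n)) \<longlonglongrightarrow> R"
    by (rule tendsto_sandwich[OF _ _ l1 tendsto_const]) (use ev2 in \<open>auto elim: eventually_mono\<close>)
  then show ?thesis unfolding achievable_def using zc by blast
qed



definition covers :: "nat \<Rightarrow> 'x set list \<Rightarrow> 'x list \<Rightarrow> bool" where
  "covers n Ws xs \<longleftrightarrow> (\<forall>t<n. xs!t \<in> Ws!t)"

lemma covering:
  fixes q :: "nat \<Rightarrow> 'x::finite set \<Rightarrow> real" and T :: "'x list set"
  assumes q_nn: "\<And>t W. 0 \<le> q t W" and q_sum: "\<And>t. t < n \<Longrightarrow> (\<Sum>W\<in>UNIV. q t W) = 1"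
    and T: "T \<subseteq> {xs. length xs = n}"
    and cov: "\<And>xs. xs \<in> T \<Longrightarrow> \<theta> \<le> (\<Prod>t<n. \<Sum>W\<in>{W. xs!t \<in> W}. q t W)"
    and th: "0 \<le> \<theta>" and small: "real (card T) * exp (- (real N * \<theta>)) < 1"
  shows "\<exists>cb. length cb = N \<and> (\<forall>j<N. length (cb!j) = n \<and> (\<forall>t<n. 0 < q t ((cb!j)!t)))
             \<and> (\<forall>xs\<in>T. \<exists>j<N. covers n (cb!j) xs)"
proof -
  define Cv where "Cv = {Ws :: 'x set list. length Ws = n}"
  have Cv_Ln: "Cv = Ln UNIV n" unfolding Cv_def Ln_UNIV ..
  have finCv: "finite Cv" unfolding Cv_Ln by (rule finite_Ln) simp
  define w where "w Ws = (\<Prod>t<n. q t (Ws!t))" for Ws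
  have w_nn: "0 \<le> w Ws" for Ws unfolding w_def by (intro prod_nonneg) (auto intro: q_nn)
  have sum_w: "sum w Cv = 1" unfolding w_def Cv_def using sum_prod_Ln_UNIV[of q n] q_sum by simp
  define pi where "pi xs = (\<Prod>t<n. \<Sum>W\<in>{W. xs!t \<in> W}. q t W)" for xs
  have sum_wc: "(\<Sum>Ws\<in>Cv. w Ws * (if covers n Ws xs then 1 else 0)) = pi xs" for xs
  proof -
    have "(\<Sum>Ws\<in>Cv. w Ws * (if covers n Ws xs then 1 else 0)) = (\<Sum>Ws\<in>Cv. \<Prod>t<n. (if xs!t \<in> Ws!t then q t (Ws!t) else 0))"
    proof (rule sum.cong[OF refl])
      fix Ws
      show "w Ws * (if covers n Ws xs then 1 else 0) = (\<Prod>t<n. (if xs!t \<in> Ws!t then q t (Ws!t) else 0))"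
      proof (cases "covers n Ws xs")
        case True then show ?thesis unfolding w_def covers_def by (auto intro: prod.cong)
      next
        case False
        then obtain t where "t < n" "xs!t \<notin> Ws!t" unfolding covers_def by auto
        then show ?thesis using False by (auto intro!: prod_zero bexI[of _ t])
      qed
    qed
    also have "\<dots> = (\<Prod>t<n. \<Sum>W\<in>UNIV. (if xs!t \<in> W then q t W else 0))"
      unfolding Cv_def by (rule sum_prod_Ln_UNIV)
    also have "\<dots> = pi xs" unfolding pi_def
      by (intro prod.cong refl) (simp add: sum.inter_filter[symmetric])
    finally show ?thesis .
  qed
  have pi_le: "pi xs \<le> 1" for xs
  proof -
    have "(\<Sum>Ws\<in>Cv. w Ws * (if covers n Ws xs then 1 else 0)) \<le> sum w Cv"
      by (rule sum_mono) (auto intro: w_nn)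
    then show ?thesis using sum_wc sum_w by simp
  qed
  have sum_wnc: "(\<Sum>Ws\<in>Cv. w Ws * (if covers n Ws xs then 0 else 1)) = 1 - pi xs" for xs
  proof -
    have "(\<Sum>Ws\<in>Cv. w Ws * (if covers n Ws xs then 0 else 1)) = (\<Sum>Ws\<in>Cv. w Ws - w Ws * (if covers n Ws xs then 1 else 0))"
      by (intro sum.cong refl) auto
    then show ?thesis using sum_wc sum_w by (simp add: sum_subtractf)
  qed
  define CB where "CB = Ln Cv N"
  have finCB: "finite CB" unfolding CB_def by (rule finite_Ln[OF finCv])
  define WW :: "'x set list list \<Rightarrow> real" where "WW cb = (\<Prod>j<N. w (cb!j))" for cb
  have WW_nn: "0 \<le> WW cb" for cb unfolding WW_def by (intro prod_nonneg) (auto intro: w_nn)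
  have sum_WW: "sum WW CB = 1" unfolding WW_def CB_def
    using sum_prod_Ln[OF finCv, of "\<lambda>j. w" N] sum_w by simp
  define unc :: "'x set list list \<Rightarrow> 'x list \<Rightarrow> real" where "unc cb xs = (if (\<forall>j<N. \<not> covers n (cb!j) xs) then 1 else 0)" for cb xs
  have unc_prod: "WW cb * unc cb xs = (\<Prod>j<N. w (cb!j) * (if covers n (cb!j) xs then 0 else 1))" for cb xs
  proof (cases "\<forall>j<N. \<not> covers n (cb!j) xs")
    case True then show ?thesis unfolding WW_def unc_def by (auto intro: prod.cong)
  next
    case False
    then obtain j where "j < N" "covers n (cb!j) xs" by auto
    then show ?thesis unfolding unc_def by (auto intro!: prod_zero bexI[of _ j])
  qed
  have exp_unc: "(\<Sum>cb\<in>CB. WW cb * unc cb xs) \<le> exp (- (real N * \<theta>))" if xs: "xs \<in> T" for xs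
  proof -
    have "(\<Sum>cb\<in>CB. WW cb * unc cb xs) = (1 - pi xs) ^ N"
      unfolding unc_prod CB_def using sum_prod_Ln[OF finCv, of "\<lambda>j Ws. w Ws * (if covers n Ws xs then 0 else 1)" N]
      by (simp add: sum_wnc)
    also have "\<dots> \<le> exp (- pi xs) ^ N"
      by (rule power_mono) (use pi_le[of xs] exp_ge_add_one_self[of "- pi xs"] in auto)
    also have "\<dots> = exp (- (real N * pi xs))" by (simp add: exp_of_nat_mult[symmetric])
    also have "\<dots> \<le> exp (- (real N * \<theta>))"
      using cov[OF xs] unfolding pi_def[symmetric] by (simp add: mult_left_mono)
    finally show ?thesis .
  qed
  define U where "U cb = (\<Sum>xs\<in>T. unc cb xs)" for cb
  have finT: "finite T" by (rule finite_subset[OF T]) (use finite_Ln[of "UNIV::'x set" n] in \<open>simp add: Ln_UNIV\<close>)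
  have "(\<Sum>cb\<in>CB. WW cb * U cb) = (\<Sum>xs\<in>T. \<Sum>cb\<in>CB. WW cb * unc cb xs)"
    unfolding U_def sum_distrib_left by (rule sum.swap)
  also have "\<dots> \<le> (\<Sum>xs\<in>T. exp (- (real N * \<theta>)))" by (rule sum_mono) (rule exp_unc)
  also have "\<dots> < 1" using small by simp
  finally have EU: "(\<Sum>cb\<in>CB. WW cb * U cb) < 1" .
  have "\<exists>cb\<in>CB. 0 < WW cb \<and> U cb < 1"
  proof (rule ccontr)
    assume neg: "\<not> (\<exists>cb\<in>CB. 0 < WW cb \<and> U cb < 1)"
    have le: "WW cb \<le> WW cb * U cb" if "cb \<in> CB" for cb
    proof (cases "WW cb = 0")
      case True then show ?thesis by simp
    next
      case False
      then have "0 < WW cb" using WW_nn[of cb] by simp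
      then have "1 \<le> U cb" using neg that by auto
      then show ?thesis using WW_nn[of cb] mult_left_mono[of 1 "U cb" "WW cb"] by simp
    qed
    have "sum WW CB \<le> (\<Sum>cb\<in>CB. WW cb * U cb)" by (rule sum_mono) (rule le)
    then show False using EU sum_WW by simp
  qed
  then obtain cb where cb: "cb \<in> CB" "0 < WW cb" "U cb < 1" by blast
  have lcb: "length cb = N" using cb(1) unfolding CB_def Ln_def by simp
  have cbj: "length (cb!j) = n" if "j < N" for j
  proof -
    have "cb!j \<in> set cb" using that lcb by simp
    then have "cb!j \<in> Cv" using cb(1) unfolding CB_def Ln_def by blast
    then show ?thesis unfolding Cv_def by simp
  qed
  have qpos: "0 < q t ((cb!j)!t)" if "j < N" "t < n" for j t
  proof -
    have "WW cb \<noteq> 0" using cb by simp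
    then have "w (cb!j) \<noteq> 0" unfolding WW_def using that by (auto simp: prod_zero_iff)
    then have "q t ((cb!j)!t) \<noteq> 0" unfolding w_def using that by (auto simp: prod_zero_iff)
    then show ?thesis using q_nn[of t "(cb!j)!t"] by simp
  qed
  have covd: "\<exists>j<N. covers n (cb!j) xs" if xs: "xs \<in> T" for xs
  proof (rule ccontr)
    assume "\<not> ?thesis"
    then have "unc cb xs = 1" unfolding unc_def by auto
    moreover have "unc cb xs \<le> U cb" unfolding U_def
      by (rule member_le_sum[OF xs]) (auto simp: unc_def finT)
    ultimately show False using cb(3) by simp
  qed
  show ?thesis using lcb cbj qpos covd by blast
qed



lemma cover_bound:
  fixes pv :: "'v::finite \<Rightarrow> real"
  assumes pv_nn: "\<And>v. 0 \<le> pv v" and pv_sum: "(\<Sum>v\<in>UNIV. pv v) = 1"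
    and adm: "admissible_channel pv adj Q"
  shows "(\<Sum>v\<in>UNIV. pv v * (- log 2 (\<Sum>W\<in>{W. v \<in> W}. \<Sum>v'\<in>UNIV. pv v' * Q v' W))) \<le> mutual_info pv Q"
proof -
  define qq where "qq W = (\<Sum>v'\<in>UNIV. pv v' * Q v' W)" for W
  define a where "a v = (\<Sum>W\<in>{W. v \<in> W}. qq W)" for v
  have Q_nn: "\<And>v W. 0 \<le> Q v W" and Q_sum: "\<And>v. (\<Sum>W\<in>UNIV. Q v W) = 1"
    and Q_mem: "\<And>v W. 0 < pv v \<Longrightarrow> 0 < Q v W \<Longrightarrow> v \<in> W"
    using adm unfolding admissible_channel_def by auto
  have qq_nn: "0 \<le> qq W" for W unfolding qq_def by (intro sum_nonneg mult_nonneg_nonneg pv_nn Q_nn)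
  have qq_ge: "pv v * Q v W \<le> qq W" for v W
    unfolding qq_def by (rule member_le_sum) (auto intro: mult_nonneg_nonneg pv_nn Q_nn)
  have per_v: "pv v * (- log 2 (a v)) \<le> (\<Sum>W\<in>UNIV. if pv v * Q v W = 0 then 0
        else pv v * Q v W * log 2 (Q v W / qq W))" for v
  proof (cases "pv v = 0")
    case True then show ?thesis by simp
  next
    case False
    then have pvp: "0 < pv v" using pv_nn[of v] by simp
    define S where "S = {W. Q v W \<noteq> 0}"
    have QS: "0 < Q v W" if "W \<in> S" for W using that Q_nn[of v W] unfolding S_def by simp
    have qqS: "0 < qq W" if "W \<in> S" for W
      using qq_ge[of v W] QS[OF that] pvp by (smt (verit) mult_pos_pos)
    have sumQS: "sum (Q v) S = 1"
    proof -
      have "sum (Q v) S = sum (Q v) UNIV" by (rule sum.mono_neutral_left) (auto simp: S_def)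
      then show ?thesis using Q_sum by simp
    qed
    then have Sne: "S \<noteq> {}" by auto
    define s where "s = sum qq S"
    have s_pos: "0 < s" unfolding s_def using Sne qqS by (intro sum_pos) auto
    have s_le: "s \<le> a v" unfolding s_def a_def
      by (rule sum_mono2) (use Q_mem[OF pvp] QS qq_nn in auto)
    have "(sum (Q v) S - (\<Sum>W\<in>S. qq W / s)) / ln 2 \<le> (\<Sum>W\<in>S. Q v W * log 2 (Q v W / (qq W / s)))"
      by (rule gibbs) (auto intro: QS divide_pos_pos qqS s_pos)
    moreover have "(\<Sum>W\<in>S. qq W / s) = 1" unfolding sum_divide_distrib[symmetric] s_def[symmetric] using s_pos by simp
    ultimately have "0 \<le> (\<Sum>W\<in>S. Q v W * log 2 (Q v W / (qq W / s)))" using sumQS by simp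
    also have "\<dots> = (\<Sum>W\<in>S. Q v W * log 2 (Q v W / qq W)) + log 2 s"
    proof -
      have "(\<Sum>W\<in>S. Q v W * log 2 (Q v W / (qq W / s))) = (\<Sum>W\<in>S. Q v W * log 2 (Q v W / qq W) + Q v W * log 2 s)"
      proof (rule sum.cong[OF refl])
        fix W assume W: "W \<in> S"
        have "Q v W / (qq W / s) = (Q v W / qq W) * s" by simp
        moreover have "log 2 ((Q v W / qq W) * s) = log 2 (Q v W / qq W) + log 2 s"
          using QS[OF W] qqS[OF W] s_pos by (intro log_mult_pos) auto
        ultimately have "log 2 (Q v W / (qq W / s)) = log 2 (Q v W / qq W) + log 2 s" by simp
        then show "Q v W * log 2 (Q v W / (qq W / s)) = Q v W * log 2 (Q v W / qq W) + Q v W * log 2 s"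
          by (simp add: distrib_left)
      qed
      then show ?thesis by (simp add: sum.distrib sum_distrib_right[symmetric] sumQS)
    qed
    finally have "- log 2 s \<le> (\<Sum>W\<in>S. Q v W * log 2 (Q v W / qq W))" by simp
    moreover have "log 2 s \<le> log 2 (a v)" using s_pos s_le by simp
    ultimately have "- log 2 (a v) \<le> (\<Sum>W\<in>S. Q v W * log 2 (Q v W / qq W))" by simp
    then have "pv v * (- log 2 (a v)) \<le> pv v * (\<Sum>W\<in>S. Q v W * log 2 (Q v W / qq W))"
      using pvp mult_left_mono[of "- log 2 (a v)" _ "pv v"] by simp
    also have "\<dots> = (\<Sum>W\<in>S. pv v * Q v W * log 2 (Q v W / qq W))"
      by (simp add: sum_distrib_left mult.assoc)
    also have "\<dots> = (\<Sum>W\<in>UNIV. if pv v * Q v W = 0 then 0 else pv v * Q v W * log 2 (Q v W / qq W))"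
    proof -
      have "(\<Sum>W\<in>UNIV. if pv v * Q v W = 0 then 0 else pv v * Q v W * log 2 (Q v W / qq W))
          = (\<Sum>W\<in>UNIV. if Q v W \<noteq> 0 then pv v * Q v W * log 2 (Q v W / qq W) else 0)"
        by (intro sum.cong) (auto simp: False)
      also have "\<dots> = (\<Sum>W\<in>{W\<in>UNIV. Q v W \<noteq> 0}. pv v * Q v W * log 2 (Q v W / qq W))"
        by (rule sum.inter_filter[symmetric]) simp
      finally show ?thesis unfolding S_def by simp
    qed
    finally show ?thesis .
  qed
  have "(\<Sum>v\<in>UNIV. pv v * (- log 2 (a v))) \<le> mutual_info pv Q"
    unfolding mutual_info_def qq_def[symmetric] by (rule sum_mono) (rule per_v)
  then show ?thesis unfolding a_def qq_def .
qed



locale ach =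
  fixes P :: "'x::finite \<Rightarrow> 'y::finite \<Rightarrow> real" and f :: "'x \<Rightarrow> 'y \<Rightarrow> 'u"
    and g :: "'y \<Rightarrow> 'z::finite" and Qc :: "'z \<Rightarrow> 'x \<Rightarrow> 'x set \<Rightarrow> real" and \<delta> :: real
  assumes nonneg: "\<And>x y. 0 \<le> P x y"
    and sum1: "(\<Sum>x\<in>UNIV. \<Sum>y\<in>UNIV. P x y) = 1"
    and pairwise: "\<And>z x x'. \<exists>y. g y = z \<and> 0 < P x y * P x' y"
    and adm: "\<And>z. admissible_channel (cond_X P g z) (aux_adj P f g z) (Qc z)"
    and dpos: "0 < \<delta>"
begin

definition qz where "qz z W = (\<Sum>x\<in>UNIV. cond_X P g z x * Qc z x W)"
definition az where "az z x = (\<Sum>W\<in>{W. x \<in> W}. qz z W)"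
definition phi where "phi x y = - log 2 (az (g y) x)"
definition hh where "hh = (\<Sum>x\<in>UNIV. \<Sum>y\<in>UNIV. P x y * phi x y)"
definition VV where "VV = (\<Sum>x\<in>UNIV. \<Sum>y\<in>UNIV. P x y * (phi x y - hh)^2)"

lemma pgpos: "0 < pgY P g z"
  using pgY_pos[of P g, OF nonneg pairwise] by blast

lemma Qc_nn: "0 \<le> Qc z x W" and Qc_sum: "(\<Sum>W\<in>UNIV. Qc z x W) = 1"
  and Qc_indep: "Qc z x W \<noteq> 0 \<Longrightarrow> indep_set (aux_adj P f g z) W"
  and Qc_mem: "0 < cond_X P g z x \<Longrightarrow> 0 < Qc z x W \<Longrightarrow> x \<in> W"
  using adm[of z] unfolding admissible_channel_def by auto

lemma cnn: "0 \<le> cond_X P g z x" by (rule cond_nn[OF nonneg])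
lemma csum: "(\<Sum>x\<in>UNIV. cond_X P g z x) = 1" by (rule cond_sum[OF pgpos])

lemma qz_nn: "0 \<le> qz z W"
  unfolding qz_def by (intro sum_nonneg mult_nonneg_nonneg cnn Qc_nn)

lemma qz_sum: "(\<Sum>W\<in>UNIV. qz z W) = 1"
proof -
  have "(\<Sum>W\<in>UNIV. qz z W) = (\<Sum>x\<in>UNIV. \<Sum>W\<in>UNIV. cond_X P g z x * Qc z x W)"
    unfolding qz_def by (rule sum.swap)
  also have "\<dots> = 1" by (simp add: sum_distrib_left[symmetric] Qc_sum csum)
  finally show ?thesis .
qed

lemma qz_indep: assumes "0 < qz z W" shows "indep_set (aux_adj P f g z) W"
proof -
  obtain x where "cond_X P g z x * Qc z x W \<noteq> 0"
    using assms unfolding qz_def by (metis (mono_tags, lifting) less_irrefl sum.neutral)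
  then show ?thesis using Qc_indep by auto
qed

lemma az_nn: "0 \<le> az z x" unfolding az_def by (intro sum_nonneg qz_nn)

lemma az_le1: "az z x \<le> 1"
proof -
  have "az z x \<le> (\<Sum>W\<in>UNIV. qz z W)" unfolding az_def by (rule sum_mono2) (auto intro: qz_nn)
  then show ?thesis using qz_sum by simp
qed

lemma az_pos: assumes "0 < P x y" shows "0 < az (g y) x"
proof -
  have "P x y \<le> (\<Sum>y'\<in>{y'. g y' = g y}. P x y')" by (rule member_le_sum) (auto intro: nonneg)
  then have cpos: "0 < cond_X P g (g y) x" using assms pgpos unfolding cond_X_def by simp
  obtain W where W: "0 < Qc (g y) x W"
  proof -
    have "\<exists>W. Qc (g y) x W \<noteq> 0" using Qc_sum[of "g y" x] by (metis sum.neutral zero_neq_one)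
    then show ?thesis using that Qc_nn by (metis less_eq_real_def)
  qed
  have xW: "x \<in> W" by (rule Qc_mem[OF cpos W])
  have "cond_X P g (g y) x * Qc (g y) x W \<le> qz (g y) W"
    unfolding qz_def by (rule member_le_sum) (auto intro: mult_nonneg_nonneg cnn Qc_nn)
  also have "\<dots> \<le> az (g y) x" unfolding az_def by (rule member_le_sum) (use xW qz_nn in auto)
  finally have le: "cond_X P g (g y) x * Qc (g y) x W \<le> az (g y) x" .
  have "0 < cond_X P g (g y) x * Qc (g y) x W" using cpos W by simp
  then show ?thesis using le by linarith
qed

lemma phi_nn: "0 \<le> phi x y"
proof (cases "az (g y) x = 0")
  case True then show ?thesis by (simp add: phi_def log_def)
next
  case False
  then have "0 < az (g y) x" using az_nn[of "g y" x] by simp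
  then have "log 2 (az (g y) x) \<le> 0" using az_le1[of "g y" x] by simp
  then show ?thesis unfolding phi_def by simp
qed

lemma hh_nn: "0 \<le> hh" unfolding hh_def by (intro sum_nonneg mult_nonneg_nonneg nonneg phi_nn)

lemma hh_bound: "hh \<le> (\<Sum>z\<in>UNIV. pgY P g z * mutual_info (cond_X P g z) (Qc z))"
proof -
  have "hh = (\<Sum>x\<in>UNIV. \<Sum>z\<in>UNIV. \<Sum>y\<in>{y. g y = z}. P x y * phi x y)"
    unfolding hh_def by (intro sum.cong refl) (rule sum_fiber_all[symmetric])
  also have "\<dots> = (\<Sum>x\<in>UNIV. \<Sum>z\<in>UNIV. (\<Sum>y\<in>{y. g y = z}. P x y) * (- log 2 (az z x)))"
    unfolding sum_distrib_right by (intro sum.cong refl) (auto simp: phi_def)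
  also have "\<dots> = (\<Sum>z\<in>UNIV. \<Sum>x\<in>UNIV. (\<Sum>y\<in>{y. g y = z}. P x y) * (- log 2 (az z x)))"
    by (rule sum.swap)
  also have "\<dots> = (\<Sum>z\<in>UNIV. pgY P g z * (\<Sum>x\<in>UNIV. cond_X P g z x * (- log 2 (az z x))))"
  proof (intro sum.cong refl)
    fix z
    have "\<And>x. (\<Sum>y\<in>{y. g y = z}. P x y) = pgY P g z * cond_X P g z x"
      using pgpos[of z] unfolding cond_X_def by simp
    then show "(\<Sum>x\<in>UNIV. (\<Sum>y\<in>{y. g y = z}. P x y) * (- log 2 (az z x))) =
        pgY P g z * (\<Sum>x\<in>UNIV. cond_X P g z x * (- log 2 (az z x)))"
      by (simp add: sum_distrib_left mult.assoc)
  qed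
  also have "\<dots> \<le> (\<Sum>z\<in>UNIV. pgY P g z * mutual_info (cond_X P g z) (Qc z))"
  proof (rule sum_mono, rule mult_left_mono)
    fix z
    show "(\<Sum>x\<in>UNIV. cond_X P g z x * (- log 2 (az z x))) \<le> mutual_info (cond_X P g z) (Qc z)"
      using cover_bound[OF cnn csum adm[of z]] unfolding az_def qz_def .
    show "0 \<le> pgY P g z" using pgpos[of z] by simp
  qed
  finally show ?thesis .
qed

lemma Epsi: "(\<Sum>x\<in>UNIV. \<Sum>y\<in>UNIV. P x y * (phi x y - hh)) = 0"
proof -
  have "(\<Sum>x\<in>UNIV. \<Sum>y\<in>UNIV. P x y * (phi x y - hh)) = (\<Sum>x\<in>UNIV. \<Sum>y\<in>UNIV. P x y * phi x y) - (\<Sum>x\<in>UNIV. \<Sum>y\<in>UNIV. P x y) * hh"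
    by (simp add: right_diff_distrib sum_subtractf sum_distrib_right)
  then show ?thesis using sum1 unfolding hh_def[symmetric] by simp
qed

lemma second_moment:
  "(\<Sum>xs\<in>{xs. length xs = n}. \<Sum>ys\<in>{ys. length ys = n}. prob_n P n xs ys * (\<Sum>t<n. phi (xs!t) (ys!t) - hh)^2)
     = real n * VV"
proof -
  define \<psi> where "\<psi> x y = phi x y - hh" for x y
  define F :: "nat \<Rightarrow> nat \<Rightarrow> nat \<Rightarrow> 'x \<Rightarrow> 'y \<Rightarrow> real" where "F t s u x y = P x y * (if u = t then \<psi> x y else 1) * (if u = s then \<psi> x y else 1)" for t s u x y
  have pt: "prob_n P n xs ys * \<psi> (xs!t) (ys!t) * \<psi> (xs!s) (ys!s) = (\<Prod>u<n. F t s u (xs!u) (ys!u))"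
    if "t < n" "s < n" for xs ys t s
  proof -
    have "(\<Prod>u<n. F t s u (xs!u) (ys!u)) = (\<Prod>u<n. P (xs!u) (ys!u)) * (\<Prod>u<n. if u = t then \<psi> (xs!u) (ys!u) else 1)
        * (\<Prod>u<n. if u = s then \<psi> (xs!u) (ys!u) else 1)"
      unfolding F_def prod.distrib ..
    also have "\<dots> = prob_n P n xs ys * \<psi> (xs!t) (ys!t) * \<psi> (xs!s) (ys!s)"
      unfolding prob_n_def using that by simp
    finally show ?thesis by simp
  qed
  have ts: "(\<Sum>xs\<in>{xs. length xs = n}. \<Sum>ys\<in>{ys. length ys = n}. prob_n P n xs ys * \<psi> (xs!t) (ys!t) * \<psi> (xs!s) (ys!s))
      = (if t = s then VV else 0)" if "t < n" "s < n" for t s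
  proof -
    have "(\<Sum>xs\<in>{xs. length xs = n}. \<Sum>ys\<in>{ys. length ys = n}. prob_n P n xs ys * \<psi> (xs!t) (ys!t) * \<psi> (xs!s) (ys!s))
        = (\<Sum>xs\<in>{xs. length xs = n}. \<Sum>ys\<in>{ys. length ys = n}. \<Prod>u<n. F t s u (xs!u) (ys!u))"
      using pt[OF that] by simp
    also have "\<dots> = (\<Prod>u<n. \<Sum>x\<in>UNIV. \<Sum>y\<in>UNIV. F t s u x y)" by (rule sum_prod_Ln2)
    also have "\<dots> = (if t = s then VV else 0)"
    proof (cases "t = s")
      case True
      have "(\<Prod>u<n. \<Sum>x\<in>UNIV. \<Sum>y\<in>UNIV. F t s u x y) = (\<Prod>u<n. if u = t then VV else 1)"
        by (rule prod.cong) (auto simp: F_def True VV_def \<psi>_def power2_eq_square sum1 mult.assoc)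
      then show ?thesis using True that by simp
    next
      case False
      have "(\<Sum>x\<in>UNIV. \<Sum>y\<in>UNIV. F t s t x y) = 0"
        using Epsi False unfolding F_def \<psi>_def by simp
      then have "(\<Prod>u<n. \<Sum>x\<in>UNIV. \<Sum>y\<in>UNIV. F t s u x y) = 0"
        using that by (intro prod_zero) auto
      then show ?thesis using False by simp
    qed
    finally show ?thesis .
  qed
  have "(\<Sum>xs\<in>{xs. length xs = n}. \<Sum>ys\<in>{ys. length ys = n}. prob_n P n xs ys * (\<Sum>t<n. phi (xs!t) (ys!t) - hh)^2)
      = (\<Sum>xs\<in>{xs. length xs = n}. \<Sum>ys\<in>{ys. length ys = n}. \<Sum>t<n. \<Sum>s<n. prob_n P n xs ys * \<psi> (xs!t) (ys!t) * \<psi> (xs!s) (ys!s))"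
  proof (intro sum.cong refl)
    fix xs ys
    have sq: "(\<Sum>t<n. \<psi> (xs!t) (ys!t))^2 = (\<Sum>t<n. \<Sum>s<n. \<psi> (xs!t) (ys!t) * \<psi> (xs!s) (ys!s))"
      unfolding power2_eq_square sum_product ..
    show "prob_n P n xs ys * (\<Sum>t<n. phi (xs!t) (ys!t) - hh)^2 = (\<Sum>t<n. \<Sum>s<n. prob_n P n xs ys * \<psi> (xs!t) (ys!t) * \<psi> (xs!s) (ys!s))"
      unfolding \<psi>_def[symmetric] sq sum_distrib_left by (simp add: mult.assoc)
  qed
  also have "\<dots> = (\<Sum>t<n. \<Sum>s<n. \<Sum>xs\<in>{xs. length xs = n}. \<Sum>ys\<in>{ys. length ys = n}. prob_n P n xs ys * \<psi> (xs!t) (ys!t) * \<psi> (xs!s) (ys!s))"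
  proof -
    have "\<And>xs. (\<Sum>ys\<in>{ys. length ys = n}. \<Sum>t<n. \<Sum>s<n. prob_n P n xs ys * \<psi> (xs!t) (ys!t) * \<psi> (xs!s) (ys!s))
       = (\<Sum>t<n. \<Sum>s<n. \<Sum>ys\<in>{ys. length ys = n}. prob_n P n xs ys * \<psi> (xs!t) (ys!t) * \<psi> (xs!s) (ys!s))"
      by (subst sum.swap) (simp add: sum.swap[of _ "{..<n}" "{ys. length ys = n}"])
    then have "(\<Sum>xs\<in>{xs. length xs = n}. \<Sum>ys\<in>{ys. length ys = n}. \<Sum>t<n. \<Sum>s<n. prob_n P n xs ys * \<psi> (xs!t) (ys!t) * \<psi> (xs!s) (ys!s))
       = (\<Sum>xs\<in>{xs. length xs = n}. \<Sum>t<n. \<Sum>s<n. \<Sum>ys\<in>{ys. length ys = n}. prob_n P n xs ys * \<psi> (xs!t) (ys!t) * \<psi> (xs!s) (ys!s))"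
      by simp
    also have "\<dots> = (\<Sum>t<n. \<Sum>s<n. \<Sum>xs\<in>{xs. length xs = n}. \<Sum>ys\<in>{ys. length ys = n}. prob_n P n xs ys * \<psi> (xs!t) (ys!t) * \<psi> (xs!s) (ys!s))"
      by (subst sum.swap) (simp add: sum.swap[of _ "{..<n}" "{xs. length xs = n}"])
    finally show ?thesis .
  qed
  also have "\<dots> = (\<Sum>t<n. \<Sum>s<n. if t = s then VV else 0)"
    by (intro sum.cong refl) (simp add: ts)
  also have "\<dots> = real n * VV" by simp
  finally show ?thesis .
qed

definition Tset where "Tset n zs = {xs. length xs = n \<and> (\<forall>t<n. 0 < az (zs!t) (xs!t)) \<and>
    (\<Sum>t<n. - log 2 (az (zs!t) (xs!t))) \<le> real n * (hh + \<delta>)}"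

lemma prob_pos_each:
  assumes "0 < prob_n P n xs ys" "t < n" shows "0 < P (xs!t) (ys!t)"
proof -
  have "prob_n P n xs ys \<noteq> 0" using assms by simp
  then have "P (xs!t) (ys!t) \<noteq> 0" unfolding prob_n_def using assms(2) by (auto simp: prod_zero_iff)
  then show ?thesis using nonneg[of "xs!t" "ys!t"] by simp
qed

lemma prob_nn: "0 \<le> prob_n P n xs ys"
  unfolding prob_n_def by (intro prod_nonneg) (auto intro: nonneg)

lemma cheb:
  assumes n: "1 \<le> n"
  shows "(\<Sum>xs\<in>{xs. length xs = n}. \<Sum>ys\<in>{ys. length ys = n}.
            prob_n P n xs ys * (if xs \<in> Tset n (map g ys) then 0 else 1)) \<le> VV / (real n * \<delta>^2)"
proof -
  define c where "c = (real n * \<delta>)^2"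
  have cpos: "0 < c" unfolding c_def using n dpos by simp
  have pw: "prob_n P n xs ys * (if xs \<in> Tset n (map g ys) then 0 else 1)
      \<le> prob_n P n xs ys * (\<Sum>t<n. phi (xs!t) (ys!t) - hh)^2 / c"
    if lens: "length xs = n" "length ys = n" for xs ys
  proof (cases "0 < prob_n P n xs ys \<and> xs \<notin> Tset n (map g ys)")
    case False
    then show ?thesis using prob_nn[of n xs ys] cpos
      by (auto intro!: divide_nonneg_pos mult_nonneg_nonneg simp: less_le)
  next
    case True
    then have pp: "0 < prob_n P n xs ys" and nT: "xs \<notin> Tset n (map g ys)" by auto
    have azp: "\<forall>t<n. 0 < az ((map g ys)!t) (xs!t)"
      using az_pos prob_pos_each[OF pp] lens by simp
    then have big: "real n * (hh + \<delta>) < (\<Sum>t<n. - log 2 (az ((map g ys)!t) (xs!t)))"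
      using nT lens unfolding Tset_def by auto
    have "(\<Sum>t<n. - log 2 (az ((map g ys)!t) (xs!t))) = (\<Sum>t<n. phi (xs!t) (ys!t))"
      unfolding phi_def using lens by (intro sum.cong) auto
    then have "real n * \<delta> < (\<Sum>t<n. phi (xs!t) (ys!t) - hh)"
      using big by (simp add: sum_subtractf algebra_simps)
    moreover have "0 \<le> real n * \<delta>" using dpos by simp
    ultimately have "c \<le> (\<Sum>t<n. phi (xs!t) (ys!t) - hh)^2" unfolding c_def
      by (intro power_mono) auto
    then have "1 \<le> (\<Sum>t<n. phi (xs!t) (ys!t) - hh)^2 / c" using cpos by simp
    then have "prob_n P n xs ys * 1 \<le> prob_n P n xs ys * ((\<Sum>t<n. phi (xs!t) (ys!t) - hh)^2 / c)"
      using pp by (intro mult_left_mono) auto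
    then show ?thesis using nT by simp
  qed
  have "(\<Sum>xs\<in>{xs. length xs = n}. \<Sum>ys\<in>{ys. length ys = n}. prob_n P n xs ys * (if xs \<in> Tset n (map g ys) then 0 else 1))
      \<le> (\<Sum>xs\<in>{xs. length xs = n}. \<Sum>ys\<in>{ys. length ys = n}. prob_n P n xs ys * (\<Sum>t<n. phi (xs!t) (ys!t) - hh)^2 / c)"
    by (intro sum_mono pw) auto
  also have "\<dots> = real n * VV / c"
    unfolding sum_divide_distrib[symmetric] second_moment ..
  also have "\<dots> = VV / (real n * \<delta>^2)" unfolding c_def using n by (simp add: power2_eq_square)
  finally show ?thesis .
qed

definition EE where "EE = hh + \<delta>"
definition Nn where "Nn n = nat \<lceil>2 powr (real n * EE) * (real n * real (card (UNIV::'x set)) + 1)\<rceil>"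

lemma EE_pos: "0 < EE" unfolding EE_def using hh_nn dpos by simp

lemma Nn_ge: "2 powr (real n * EE) * (real n * real (card (UNIV::'x set)) + 1) \<le> real (Nn n)"
  unfolding Nn_def by linarith

lemma Nn_pos: "1 \<le> Nn n"
proof -
  have "1 \<le> 2 powr (real n * EE)" by (rule ge_one_powr_ge_zero) (use EE_pos in auto)
  moreover have "1 \<le> real n * real (card (UNIV::'x set)) + 1" by simp
  ultimately have "1 \<le> 2 powr (real n * EE) * (real n * real (card (UNIV::'x set)) + 1)"
    by (metis mult_mono' mult_1 zero_le_one)
  then show ?thesis using Nn_ge[of n] by linarith
qed

lemma Nn_le: "real (Nn n) \<le> 2 powr (real n * EE) * (real n * real (card (UNIV::'x set)) + 2)"
proof -
  have pos: "0 \<le> 2 powr (real n * EE) * (real n * real (card (UNIV::'x set)) + 1)" by simp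
  have "real (Nn n) \<le> 2 powr (real n * EE) * (real n * real (card (UNIV::'x set)) + 1) + 1"
    unfolding Nn_def using pos by linarith
  moreover have "1 \<le> 2 powr (real n * EE)" by (rule ge_one_powr_ge_zero) (use EE_pos in auto)
  ultimately show ?thesis by (simp add: algebra_simps)
qed

lemma card_T: "card (Tset n zs) \<le> card (UNIV::'x set) ^ n"
proof -
  have "card (Tset n zs) \<le> card {xs::'x list. length xs = n}"
    by (rule card_mono) (use finite_Ln[of "UNIV::'x set" n] in \<open>auto simp: Ln_UNIV Tset_def\<close>)
  also have "\<dots> = card (UNIV::'x set) ^ n" using card_lists_length_eq[of "UNIV::'x set" n] by simp
  finally show ?thesis .
qed

lemma cover_exists:
  assumes lz: "length zs = n"
  shows "\<exists>cb. length cb = Nn n \<and> (\<forall>j<Nn n. length (cb!j) = n \<and> (\<forall>t<n. 0 < qz (zs!t) ((cb!j)!t)))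
             \<and> (\<forall>xs\<in>Tset n zs. \<exists>j<Nn n. covers n (cb!j) xs)"
proof (rule covering)
  define \<theta> where "\<theta> = 2 powr (- (real n * EE))"
  show "\<And>t W. 0 \<le> qz (zs!t) W" by (rule qz_nn)
  show "\<And>t. t < n \<Longrightarrow> (\<Sum>W\<in>UNIV. qz (zs!t) W) = 1" by (rule qz_sum)
  show "Tset n zs \<subseteq> {xs. length xs = n}" unfolding Tset_def by auto
  show "0 \<le> \<theta>" unfolding \<theta>_def by simp
  show "\<theta> \<le> (\<Prod>t<n. \<Sum>W\<in>{W. xs!t \<in> W}. qz (zs!t) W)" if xs: "xs \<in> Tset n zs" for xs
  proof -
    have azp: "\<And>t. t < n \<Longrightarrow> 0 < az (zs!t) (xs!t)" and sl: "(\<Sum>t<n. - log 2 (az (zs!t) (xs!t))) \<le> real n * (hh + \<delta>)"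
      using xs unfolding Tset_def by auto
    have pp: "0 < (\<Prod>t<n. az (zs!t) (xs!t))" by (rule prod_pos) (use azp in auto)
    have "log 2 (\<Prod>t<n. az (zs!t) (xs!t)) = (\<Sum>t<n. log 2 (az (zs!t) (xs!t)))"
      by (rule log_prod2) (use azp in \<open>auto simp: less_le\<close>)
    then have lg: "- (real n * EE) \<le> log 2 (\<Prod>t<n. az (zs!t) (xs!t))"
      using sl unfolding EE_def by (simp add: sum_negf)
    have "\<theta> \<le> 2 powr (log 2 (\<Prod>t<n. az (zs!t) (xs!t)))" unfolding \<theta>_def using lg by simp
    also have "\<dots> = (\<Prod>t<n. az (zs!t) (xs!t))" using pp by simp
    finally show ?thesis unfolding az_def .
  qed
  show "real (card (Tset n zs)) * exp (- (real (Nn n) * \<theta>)) < 1"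
  proof -
    define K where "K = real (card (UNIV::'x set))"
    have "real (Nn n) * \<theta> \<ge> (2 powr (real n * EE) * (real n * K + 1)) * \<theta>"
      using Nn_ge[of n] unfolding K_def \<theta>_def by (intro mult_right_mono) auto
    moreover have "(2 powr (real n * EE) * (real n * K + 1)) * \<theta> = real n * K + 1"
      unfolding \<theta>_def by (simp add: powr_minus field_simps)
    ultimately have Nt: "real n * K + 1 \<le> real (Nn n) * \<theta>" by simp
    have "real (card (Tset n zs)) \<le> K ^ n" unfolding K_def using card_T[of n zs]
      by (metis of_nat_le_iff of_nat_power)
    also have "\<dots> \<le> exp K ^ n"
    proof (rule power_mono)
      show "K \<le> exp K" using exp_ge_add_one_self[of K] by linarith
      show "0 \<le> K" unfolding K_def by simp
    qed
    also have "\<dots> = exp (real n * K)" by (simp add: exp_of_nat_mult)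
    finally have cT: "real (card (Tset n zs)) \<le> exp (real n * K)" .
    have "real (card (Tset n zs)) * exp (- (real (Nn n) * \<theta>)) \<le> exp (real n * K) * exp (- (real n * K + 1))"
      using cT Nt by (intro mult_mono) auto
    also have "\<dots> = exp (-1)" by (simp add: exp_add[symmetric])
    also have "\<dots> < 1" by simp
    finally show ?thesis .
  qed
qed

end



lemma prefix_same_len:
  assumes "prefix u v" "length u = length v" shows "u = v"
proof -
  obtain c where "v = u @ c" using assms(1) prefixE by blast
  then have "c = []" using assms(2) by simp
  then show ?thesis using \<open>v = u @ c\<close> by simp
qed

context ach
begin

definition uu where "uu n = EE + (2 + log 2 (real n * real (card (UNIV::'x set)) + 2)) / real n
   + real (card (UNIV::'x set)) * VV / (real n * \<delta>^2)"

lemma block_code: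
  assumes n: "1 \<le> n"
  shows "\<exists>enc. pf_on n enc \<and> col_ok P f g n enc \<and> code_rate P g n enc \<le> uu n"
proof -
  define K where "K = card (UNIV::'x set)"
  have K1: "1 \<le> K" unfolding K_def by (simp add: card_gt_0_iff Suc_le_eq)
  define N where "N = Nn n"
  have N1: "1 \<le> N" unfolding N_def by (rule Nn_pos)
  define L1 where "L1 = nat \<lceil>log 2 (real N)\<rceil>"
  have logN: "0 \<le> log 2 (real N)" using N1 by simp
  have L1ge: "log 2 (real N) \<le> real L1" unfolding L1_def by linarith
  have L1le: "real L1 \<le> log 2 (real N) + 1" unfolding L1_def using logN by linarith
  define cb where "cb zs = (SOME cb. length cb = N \<and> (\<forall>j<N. length (cb!j) = n \<and> (\<forall>t<n. 0 < qz (zs!t) ((cb!j)!t)))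
             \<and> (\<forall>xs\<in>Tset n zs. \<exists>j<N. covers n (cb!j) xs))" for zs
  have cbp: "length (cb zs) = N \<and> (\<forall>j<N. length (cb zs!j) = n \<and> (\<forall>t<n. 0 < qz (zs!t) ((cb zs!j)!t)))
             \<and> (\<forall>xs\<in>Tset n zs. \<exists>j<N. covers n (cb zs!j) xs)" if "length zs = n" for zs
    unfolding cb_def N_def by (rule someI_ex) (rule cover_exists[OF that])
  have N2: "N \<le> 2 ^ L1"
  proof -
    have "real N = 2 powr (log 2 (real N))" using N1 by simp
    also have "\<dots> \<le> 2 powr (real L1)" using L1ge by simp
    also have "\<dots> = 2 ^ L1" by (simp add: powr_realpow)
    finally show ?thesis by (metis of_nat_le_iff of_nat_numeral of_nat_power)
  qed
  obtain e1 where e1: "e1 ` {..<N} \<subseteq> {bs::bool list. length bs = L1}" "inj_on e1 {..<N}"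
    using card_le_inj[of "{..<N}" "{bs::bool list. length bs = L1}"] N2
      finite_lists_length_eq[of "UNIV::bool set" L1] by (auto simp: card_bool_lists)
  have KK: "K ^ n \<le> 2 ^ (n * K)"
  proof -
    have "K ^ n \<le> (2 ^ K) ^ n" by (rule power_mono) (auto intro: less_imp_le)
    then show ?thesis by (simp add: power_mult[symmetric] mult.commute)
  qed
  obtain e2 where e2: "e2 ` {xs::'x list. length xs = n} \<subseteq> {bs::bool list. length bs = n * K}"
      "inj_on e2 {xs::'x list. length xs = n}"
    using card_le_inj[of "{xs::'x list. length xs = n}" "{bs::bool list. length bs = n * K}"] KK
      finite_lists_length_eq[of "UNIV::bool set" "n*K"] finite_Ln[of "UNIV::'x set" n]
      card_lists_length_eq[of "UNIV::'x set" n]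
    by (auto simp: card_bool_lists Ln_UNIV K_def)
  define idx where "idx xs zs = (LEAST j. j < N \<and> covers n (cb zs ! j) xs)" for xs zs
  have idxp: "idx xs zs < N \<and> covers n (cb zs ! idx xs zs) xs" if "length zs = n" "xs \<in> Tset n zs" for xs zs
  proof -
    have "\<exists>j. j < N \<and> covers n (cb zs ! j) xs" using cbp[OF that(1)] that(2) by blast
    then show ?thesis unfolding idx_def by (rule LeastI_ex)
  qed
  define enc where "enc xs zs = (if length zs = n \<and> xs \<in> Tset n zs then False # e1 (idx xs zs) else True # e2 xs)"
    for xs zs
  have len_in: "length (enc xs zs) = 1 + L1" if "length zs = n" "xs \<in> Tset n zs" for xs zs
    using idxp[OF that] e1(1) that unfolding enc_def by auto
  have len_out: "length (enc xs zs) = 1 + n * K" if "length xs = n" "\<not> (length zs = n \<and> xs \<in> Tset n zs)" for xs zs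
    using e2(1) that unfolding enc_def by auto
  have pf: "pf_on n enc"
    unfolding pf_on_def
  proof (intro allI impI)
    fix xs zs xs' zs'
    assume l: "length xs = n \<and> length zs = n \<and> length xs' = n \<and> length zs' = n"
      and p: "prefix (enc xs zs) (enc xs' zs')"
    show "enc xs zs = enc xs' zs'"
    proof (cases "xs \<in> Tset n zs")
      case True
      then have "hd (enc xs zs) = False" using l unfolding enc_def by simp
      moreover have "hd (enc xs' zs') = hd (enc xs zs)"
        using p unfolding enc_def by (auto split: if_splits)
      ultimately have "xs' \<in> Tset n zs'" using l unfolding enc_def by (auto split: if_splits)
      then have "length (enc xs zs) = length (enc xs' zs')" using len_in True l by simp
      then show ?thesis using p prefix_same_len by blast
    next
      case False
      then have "hd (enc xs zs) = True" using l unfolding enc_def by simp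
      moreover have "hd (enc xs' zs') = hd (enc xs zs)"
        using p unfolding enc_def by (auto split: if_splits)
      ultimately have "xs' \<notin> Tset n zs'" using l unfolding enc_def by (auto split: if_splits)
      then have "length (enc xs zs) = length (enc xs' zs')" using len_out False l by simp
      then show ?thesis using p prefix_same_len by blast
    qed
  qed
  have col: "col_ok P f g n enc"
    unfolding col_ok_def
  proof (intro allI impI)
    fix xs xs' ys
    assume a: "length xs = n \<and> length xs' = n \<and> length ys = n \<and> 0 < prob_n P n xs ys \<and>
        0 < prob_n P n xs' ys \<and> enc xs (map g ys) = enc xs' (map g ys)"
    have lx: "length xs = n" and lx': "length xs' = n" and ly: "length ys = n"
      and p1: "0 < prob_n P n xs ys" and p2: "0 < prob_n P n xs' ys" using a by auto
    define zs where "zs = map g ys"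
    have lz: "length zs = n" using ly unfolding zs_def by simp
    have same: "enc xs zs = enc xs' zs" using a unfolding zs_def by simp
    have zt: "zs!t = g (ys!t)" if "t < n" for t using that ly unfolding zs_def by simp
    show "map2 f xs ys = map2 f xs' ys"
    proof (cases "xs \<in> Tset n zs")
      case True
      have E1: "enc xs zs = False # e1 (idx xs zs)" unfolding enc_def using True lz by simp
      have T': "xs' \<in> Tset n zs"
      proof (rule ccontr)
        assume "xs' \<notin> Tset n zs"
        then have "enc xs' zs = True # e2 xs'" unfolding enc_def by simp
        then show False using E1 same by simp
      qed
      have E2: "enc xs' zs = False # e1 (idx xs' zs)" unfolding enc_def using T' lz by simp
      have "e1 (idx xs zs) = e1 (idx xs' zs)" using same E1 E2 by simp
      moreover have "idx xs zs \<in> {..<N}" "idx xs' zs \<in> {..<N}" using idxp[OF lz True] idxp[OF lz T'] by auto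
      ultimately have ii: "idx xs zs = idx xs' zs" using e1(2) unfolding inj_on_def by blast
      define j where "j = idx xs zs"
      have jN: "j < N" and c1: "covers n (cb zs ! j) xs" using idxp[OF lz True] unfolding j_def by auto
      have c2: "covers n (cb zs ! j) xs'" using idxp[OF lz T'] ii unfolding j_def by simp
      have eq: "f (xs!t) (ys!t) = f (xs'!t) (ys!t)" if t: "t < n" for t
      proof (rule ccontr)
        assume ne: "f (xs!t) (ys!t) \<noteq> f (xs'!t) (ys!t)"
        have "0 < qz (zs!t) ((cb zs ! j)!t)" using cbp[OF lz] jN t by blast
        then have ind: "indep_set (aux_adj P f g (zs!t)) ((cb zs ! j)!t)" by (rule qz_indep)
        have m1: "xs!t \<in> (cb zs ! j)!t" using c1 t unfolding covers_def by blast
        have m2: "xs'!t \<in> (cb zs ! j)!t" using c2 t unfolding covers_def by blast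
        have q1: "0 < P (xs!t) (ys!t)" by (rule prob_pos_each[OF p1 t])
        have q2: "0 < P (xs'!t) (ys!t)" by (rule prob_pos_each[OF p2 t])
        have "aux_adj P f g (zs!t) (xs!t) (xs'!t)"
          unfolding aux_adj_def by (intro exI[of _ "ys!t"]) (simp add: q1 q2 ne zt[OF t])
        then show False using ind m1 m2 unfolding indep_set_def by blast
      qed
      show ?thesis
      proof (rule nth_equalityI)
        show "length (map2 f xs ys) = length (map2 f xs' ys)" using lx lx' by simp
        fix t assume "t < length (map2 f xs ys)"
        then have t: "t < n" using lx ly by simp
        then show "map2 f xs ys ! t = map2 f xs' ys ! t" using eq[OF t] lx lx' ly by simp
      qed
    next
      case False
      have E1: "enc xs zs = True # e2 xs" unfolding enc_def using False by simp
      have T': "xs' \<notin> Tset n zs"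
      proof
        assume T': "xs' \<in> Tset n zs"
        have "enc xs' zs = False # e1 (idx xs' zs)" unfolding enc_def using T' lz by simp
        then show False using E1 same by simp
      qed
      have E2: "enc xs' zs = True # e2 xs'" unfolding enc_def using T' by simp
      have "e2 xs = e2 xs'" using same E1 E2 by simp
      then have "xs = xs'" using e2(2) lx lx' unfolding inj_on_def by blast
      then show ?thesis by simp
    qed
  qed
  have rate: "code_rate P g n enc \<le> uu n"
  proof -
    define ind where "ind xs ys = (if xs \<in> Tset n (map g ys) then 0 else 1::real)" for xs ys
    have pw: "real (length (enc xs (map g ys))) \<le> (1 + real L1) + real n * real K * ind xs ys"
      if "length xs = n" "length ys = n" for xs ys
    proof (cases "xs \<in> Tset n (map g ys)")
      case True then show ?thesis using len_in[of "map g ys" xs] that unfolding ind_def by simp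
    next
      case False then show ?thesis using len_out[of xs "map g ys"] that unfolding ind_def by simp
    qed
    have S: "(\<Sum>(xs, ys)\<in>{xs. length xs = n} \<times> {ys. length ys = n}. prob_n P n xs ys * real (length (enc xs (map g ys))))
        \<le> (\<Sum>(xs, ys)\<in>{xs. length xs = n} \<times> {ys. length ys = n}. prob_n P n xs ys * ((1 + real L1) + real n * real K * ind xs ys))"
    proof (rule sum_mono)
      fix p assume "p \<in> {xs::'x list. length xs = n} \<times> {ys::'y list. length ys = n}"
      then obtain xs ys where p: "p = (xs, ys)" "length xs = n" "length ys = n" by auto
      have "prob_n P n xs ys * real (length (enc xs (map g ys))) \<le> prob_n P n xs ys * ((1 + real L1) + real n * real K * ind xs ys)"
        by (rule mult_left_mono[OF pw[OF p(2,3)] prob_nn])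
      then show "(case p of (xs, ys) \<Rightarrow> prob_n P n xs ys * real (length (enc xs (map g ys))))
          \<le> (case p of (xs, ys) \<Rightarrow> prob_n P n xs ys * ((1 + real L1) + real n * real K * ind xs ys))"
        using p(1) by simp
    qed
    also have "\<dots> = (1 + real L1) * (\<Sum>(xs, ys)\<in>{xs. length xs = n} \<times> {ys. length ys = n}. prob_n P n xs ys)
        + real n * real K * (\<Sum>(xs, ys)\<in>{xs. length xs = n} \<times> {ys. length ys = n}. prob_n P n xs ys * ind xs ys)"
      by (simp add: sum_distrib_left sum.distrib algebra_simps case_prod_unfold)
    also have "\<dots> \<le> (1 + real L1) + real n * real K * (VV / (real n * \<delta>^2))"
    proof -
      have "(\<Sum>(xs, ys)\<in>{xs. length xs = n} \<times> {ys. length ys = n}. prob_n P n xs ys * ind xs ys)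
        = (\<Sum>xs\<in>{xs. length xs = n}. \<Sum>ys\<in>{ys. length ys = n}. prob_n P n xs ys * ind xs ys)"
        by (rule sum.cartesian_product[symmetric])
      then have C: "(\<Sum>(xs, ys)\<in>{xs. length xs = n} \<times> {ys. length ys = n}. prob_n P n xs ys * ind xs ys) \<le> VV / (real n * \<delta>^2)"
        using cheb[OF n] unfolding ind_def by simp
      have "real n * real K * (\<Sum>(xs, ys)\<in>{xs. length xs = n} \<times> {ys. length ys = n}. prob_n P n xs ys * ind xs ys)
          \<le> real n * real K * (VV / (real n * \<delta>^2))"
        using C by (rule mult_left_mono) simp
      then show ?thesis unfolding sum_prob_n[OF sum1] by simp
    qed
    finally have S2: "(\<Sum>(xs, ys)\<in>{xs. length xs = n} \<times> {ys. length ys = n}. prob_n P n xs ys * real (length (enc xs (map g ys))))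
        \<le> (1 + real L1) + real K * VV / \<delta>^2" using n by simp
    have npos: "0 < real n" using n by simp
    have "code_rate P g n enc \<le> ((1 + real L1) + real K * VV / \<delta>^2) / real n"
      unfolding code_rate_def using S2 npos by (simp add: divide_right_mono)
    also have "\<dots> = (1 + real L1) / real n + real K * VV / (real n * \<delta>^2)"
      by (simp add: add_divide_distrib)
    also have "(1 + real L1) / real n \<le> EE + (2 + log 2 (real n * real K + 2)) / real n"
    proof -
      have "log 2 (real N) \<le> log 2 (2 powr (real n * EE) * (real n * real K + 2))"
        using Nn_le[of n] N1 unfolding N_def K_def by simp
      also have "\<dots> = log 2 (2 powr (real n * EE)) + log 2 (real n * real K + 2)"
        by (rule log_mult_pos) (auto intro: add_nonneg_pos)
      also have "\<dots> = real n * EE + log 2 (real n * real K + 2)" by simp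
      finally have "1 + real L1 \<le> 2 + real n * EE + log 2 (real n * real K + 2)" using L1le by simp
      then have "(1 + real L1) / real n \<le> (2 + real n * EE + log 2 (real n * real K + 2)) / real n"
        using npos by (simp add: divide_right_mono)
      also have "\<dots> = EE + (2 + log 2 (real n * real K + 2)) / real n"
        using npos by (simp add: field_simps)
      finally show ?thesis .
    qed
    finally show ?thesis unfolding uu_def K_def by simp
  qed
  show ?thesis using pf col rate by blast
qed

end



context ach
begin

lemma uu_lim: "uu \<longlonglongrightarrow> EE"
proof -
  define K where "K = real (card (UNIV::'x set))"
  have K0: "0 \<le> K" unfolding K_def by simp
  define c0 where "c0 = 2 + log 2 (K + 2)"
  define A where "A n = (2 + log 2 (real n * K + 2)) / real n" for n :: nat
  define B where "B n = real (card (UNIV::'x set)) * VV / (real n * \<delta>^2)" for n :: nat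
  have uuAB: "uu n = EE + A n + B n" for n unfolding uu_def A_def B_def K_def by simp
  have lnn: "(\<lambda>n. ln (real n) / real n) \<longlonglongrightarrow> 0"
    by (rule filterlim_compose[OF ln_x_over_x_tendsto_0 filterlim_real_sequentially])
  have ub: "(\<lambda>n. c0 * inverse (real n) + (1 / ln 2) * (ln (real n) / real n)) \<longlonglongrightarrow> 0"
    using tendsto_add[OF tendsto_mult[OF tendsto_const[of c0] lim_inverse_n] tendsto_mult[OF tendsto_const[of "1 / ln 2"] lnn]]
    by simp
  have ev: "eventually (\<lambda>n. 0 \<le> A n \<and> A n \<le> c0 * inverse (real n) + (1 / ln 2) * (ln (real n) / real n)) sequentially"
    using eventually_ge_at_top[of "1::nat"]
  proof eventually_elim
    case (elim n)
    then have npos: "0 < real n" by simp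
    have l1: "1 \<le> log 2 (real n * K + 2)"
    proof -
      have nk: "0 \<le> real n * K" using K0 by simp
      have "log 2 2 \<le> log 2 (real n * K + 2)" using nk by (subst log_le_cancel_iff) auto
      then show ?thesis by simp
    qed
    have "real n * K + 2 \<le> real n * (K + 2)" using elim by (simp add: algebra_simps)
    moreover have "0 < real n * K + 2" using K0 npos by (simp add: add_nonneg_pos)
    ultimately have "log 2 (real n * K + 2) \<le> log 2 (real n * (K + 2))"
      by (subst log_le_cancel_iff) auto
    also have "\<dots> = log 2 (real n) + log 2 (K + 2)" using K0 npos by (intro log_mult_pos) auto
    finally have "2 + log 2 (real n * K + 2) \<le> c0 + ln (real n) / ln 2" unfolding c0_def log_def by simp
    then have "A n \<le> (c0 + ln (real n) / ln 2) / real n" unfolding A_def using npos by (simp add: divide_right_mono)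
    also have "\<dots> = c0 * inverse (real n) + (1 / ln 2) * (ln (real n) / real n)"
      using npos by (simp add: add_divide_distrib divide_inverse algebra_simps)
    finally show ?case using l1 npos unfolding A_def by simp
  qed
  have A0: "A \<longlonglongrightarrow> 0"
    by (rule tendsto_sandwich[OF _ _ tendsto_const ub]) (use ev in \<open>auto elim: eventually_mono\<close>)
  have B0: "B \<longlonglongrightarrow> 0"
  proof -
    define c where "c = real (card (UNIV::'x set)) * VV / \<delta>^2"
    have "B n = c * inverse (real n)" for n
      unfolding B_def c_def by (simp add: field_simps)
    then have "B = (\<lambda>n. c * inverse (real n))" by (rule ext)
    moreover have "(\<lambda>n. c * inverse (real n)) \<longlonglongrightarrow> c * 0"
      by (rule tendsto_mult[OF tendsto_const lim_inverse_n])
    ultimately show ?thesis by simp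
  qed
  have "(\<lambda>n. EE + A n + B n) \<longlonglongrightarrow> EE + 0 + 0"
    by (intro tendsto_add tendsto_const A0 B0)
  then show ?thesis unfolding uuAB[abs_def] by simp
qed

end



theorem theorem2:
  fixes P :: "'x::finite \<Rightarrow> 'y::finite \<Rightarrow> real"
    and f :: "'x \<Rightarrow> 'y \<Rightarrow> 'u::finite"
    and g :: "'y \<Rightarrow> 'z::finite"
  assumes nonneg: "\<And>x y. 0 \<le> P x y"
    and sum1: "(\<Sum>x\<in>UNIV. \<Sum>y\<in>UNIV. P x y) = 1"
    and fullX: "\<And>x. 0 < (\<Sum>y\<in>UNIV. P x y)"
    and fullY: "\<And>y. 0 < (\<Sum>x\<in>UNIV. P x y)"
    and pairwise: "\<And>z x x'. \<exists>y. g y = z \<and> 0 < P x y * P x' y"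
  shows "opt_rate P f g = (\<Sum>z\<in>UNIV. pgY P g z * korner_entropy (cond_X P g z) (aux_adj P f g z))"
proof -
  define K where "K z = korner_entropy (cond_X P g z) (aux_adj P f g z)" for z
  define Hs where "Hs = (\<Sum>z\<in>UNIV. pgY P g z * K z)"
  define A where "A = {R. achievable P f g R}"
  have pgpos: "\<And>z. 0 < pgY P g z" using pgY_pos[of P g, OF nonneg pairwise] by blast
  have lower: "Hs \<le> R" if RA: "R \<in> A" for R
  proof -
    obtain enc dec where zc: "\<forall>n\<ge>1. zero_error_code P f g n (enc n) (dec n)"
      and lim: "(\<lambda>n. code_rate P g n (enc n)) \<longlonglongrightarrow> R"
      using RA unfolding A_def achievable_def by blast
    have "\<forall>n\<ge>1. Hs \<le> code_rate P g n (enc n)"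
      using converse_rate[OF nonneg sum1 pairwise] zc unfolding Hs_def K_def by blast
    then show ?thesis using LIMSEQ_le_const[OF lim] by blast
  qed
  have upper: "\<exists>R\<in>A. R < Hs + \<epsilon>" if eps: "0 < \<epsilon>" for \<epsilon>
  proof -
    define e where "e = \<epsilon> / 4"
    have e0: "0 < e" unfolding e_def using eps by simp
    have "\<forall>z. \<exists>Q. admissible_channel (cond_X P g z) (aux_adj P f g z) Q \<and>
        mutual_info (cond_X P g z) Q < K z + e"
    proof
      fix z
      show "\<exists>Q. admissible_channel (cond_X P g z) (aux_adj P f g z) Q \<and> mutual_info (cond_X P g z) Q < K z + e"
        unfolding K_def
        by (rule korner_approx[OF cond_nn[OF nonneg] cond_sum[OF pgpos] _ e0]) (simp add: aux_adj_def)
    qed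
    then obtain Qc where Qc: "\<And>z. admissible_channel (cond_X P g z) (aux_adj P f g z) (Qc z)"
      "\<And>z. mutual_info (cond_X P g z) (Qc z) < K z + e"
      by metis
    interpret ach P f g Qc e
      by unfold_locales (use nonneg sum1 pairwise Qc(1) e0 in auto)
    have "hh \<le> (\<Sum>z\<in>UNIV. pgY P g z * mutual_info (cond_X P g z) (Qc z))" by (rule hh_bound)
    also have "\<dots> \<le> (\<Sum>z\<in>UNIV. pgY P g z * (K z + e))"
      by (intro sum_mono mult_left_mono) (auto intro: less_imp_le Qc(2) pgpos)
    also have "\<dots> = Hs + e" unfolding Hs_def
      by (simp add: distrib_left sum.distrib sum_distrib_right[symmetric] pgY_sum[OF sum1])
    finally have hb: "hh \<le> Hs + e" .
    have EEb: "EE < Hs + 3 * e" unfolding EE_def using hb e0 by simp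
    have "\<forall>n. \<exists>enc. 1 \<le> n \<longrightarrow> pf_on n enc \<and> col_ok P f g n enc \<and> code_rate P g n enc \<le> uu n"
      using block_code by blast
    then obtain encs where encs: "\<And>n. 1 \<le> n \<Longrightarrow> pf_on n (encs n) \<and> col_ok P f g n (encs n) \<and> code_rate P g n (encs n) \<le> uu n"
      by metis
    have "achievable P f g (Hs + 3 * e)"
      by (rule achievable_of_upper[OF sum1 encs uu_lim EEb])
    moreover have "Hs + 3 * e < Hs + \<epsilon>" unfolding e_def using eps by simp
    ultimately show ?thesis unfolding A_def by blast
  qed
  have ne: "A \<noteq> {}" using upper[of 1] by auto
  have "Inf A = Hs"
  proof (rule cInf_eq_non_empty[OF ne])
    show "\<And>x. x \<in> A \<Longrightarrow> Hs \<le> x" by (rule lower)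
    fix y assume lb: "\<And>x. x \<in> A \<Longrightarrow> y \<le> x"
    show "y \<le> Hs"
    proof (rule ccontr)
      assume "\<not> y \<le> Hs"
      then have "0 < y - Hs" by simp
      then obtain R where "R \<in> A" "R < Hs + (y - Hs)" using upper by blast
      then show False using lb by fastforce
    qed
  qed
  then show ?thesis unfolding opt_rate_def A_def Hs_def K_def .
qed


end
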